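(* Let $\bigwedge_{\ast}$ be a complex Grassmann algebra (generated by finitely or countably many odd generators $\zeta_1,\zeta_2,\dots$), with even part $\bigwedge_{\ast}^{0}$ and odd part $\bigwedge_{\ast}^{1}$. Let $z$ be an even formal variable and $\theta$ an odd formal variable (so $\theta^2=0$ and $\theta$ anticommutes with $\bigwedge_{\ast}^{1}$). For $j\in\mathbb{Z}$ consider the vector fields $$\mathcal{L}^{(1)}_{j}=-z^{j+1}\frac{\partial}{\partial z}-\left(\frac{j+1}{2}\right)\theta z^{j}\frac{\partial}{\partial\theta},\qquad \mathcal{G}_{j+\frac{1}{2}}=-z^{j+1}\left(\frac{\partial}{\partial\theta}-\theta\frac{\partial}{\partial z}\right),$$ where $\partial/\partial\theta$ is the (odd) left derivative. Let $A_{j}\in\bigwedge_{\ast}^{0}$ and $M_{j+\frac{1}{2}}\in\bigwedge_{\ast}^{1}$ for $j\in\mathbb{Z}_{<0}$ be arbitrary sequences, and define the operator $$E_{A,M}=\exp\left(-\sum_{j\in\mathbb{Z}_{<0}}\left(A_{j}\mathcal{L}^{(1)}_{j}+M_{j+\frac{1}{2}}\mathcal{G}_{j+\frac{1}{2}}\right)\right)$$ acting on $(\bigwedge_{\ast}z[[z^{-1}]][\theta])^{0}\oplus(\bigwedge_{\ast}z[[z^{-1}]][\theta])^{1}$. Set $(\tilde z,\tilde\theta)=E_{A,M}\cdot(z,\theta)$, where $E_{A,M}$ acts on each component separately. Then, with $D=\frac{\partial}{\partial\theta}+\theta\frac{\partial}{\partial z}$, one has $$D\tilde z=\tilde\theta\,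 D\tilde\theta,$$ i.e. $(\tilde z,\tilde\theta)$ is a formal $\mathcal{N}=1$ superconformal map.
   Context: A pair $(\tilde z,\tilde\theta)$ of an even and an odd formal superfunction of $(z,\theta)$ is called ($\mathcal{N}=1$) superconformal if the odd derivative $D=\partial_\theta+\theta\partial_z$ transforms homogeneously of degree one, which is equivalent to $D\tilde z=\tilde\theta D\tilde\theta$. The superscripts $0,1$ denote the even and odd parts of the $\mathbb{Z}_2$-graded algebra $\bigwedge_{\ast}z[[z^{-1}]][\theta]$ (grading from the Grassmann algebra together with $\theta$ odd, $z$ even). *)

theory Defs
  imports Complex_Main "HOL-Library.Function_Algebras"
begin

text \<open>An element is represented by its coefficient function on monomials:
  a finite set S = {s1 < ... < sk} of generator indices stands for the
  monomial zeta_s1 ... zeta_sk.\<close>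

type_synonym gr = "nat set \<Rightarrow> complex"

definition grass :: "gr \<Rightarrow> bool" where
  "grass a \<longleftrightarrow> finite {S. a S \<noteq> 0} \<and> (\<forall>S. a S \<noteq> 0 \<longrightarrow> finite S)"

definition geven :: "gr \<Rightarrow> bool" where
  "geven a \<longleftrightarrow> (\<forall>S. a S \<noteq> 0 \<longrightarrow> even (card S))"

definition godd :: "gr \<Rightarrow> bool" where
  "godd a \<longleftrightarrow> (\<forall>S. a S \<noteq> 0 \<longrightarrow> odd (card S))"

text \<open>Sign of reordering zeta_T zeta_U (T, U disjoint) into increasing order.\<close>
definition gsign :: "nat set \<Rightarrow> nat set \<Rightarrow> complex" where
  "gsign T U = (-1) ^ card {(t, u). t \<in> T \<and> u \<in> U \<and> u < t}"

definition gmul :: "gr \<Rightarrow> gr \<Rightarrow> gr" where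
  "gmul a b = (\<lambda>S. if finite S then (\<Sum>T\<in>Pow S. gsign T (S - T) * a T * b (S - T)) else 0)"

definition gone :: gr where
  "gone = (\<lambda>S. if S = {} then 1 else 0)"

definition gscale :: "complex \<Rightarrow> gr \<Rightarrow> gr" where
  "gscale c a = (\<lambda>S. c * a S)"

definition ghat :: "gr \<Rightarrow> gr" where
  "ghat a = (\<lambda>S. (-1) ^ card S * a S)"

type_synonym lser = "int \<Rightarrow> gr"            \<comment> \<open>coefficient of z^n\<close>
type_synonym sser = "lser \<times> lser"          \<comment> \<open>(f0, f1) = f0(z) + theta f1(z)\<close>

text \<open>Product of Grassmann-valued Laurent series (finite sum for series bounded above in degree).\<close>
definition lmul :: "lser \<Rightarrow> lser \<Rightarrow> lser" where
  "lmul f g = (\<lambda>n. \<Sum>k\<in>{k. f k \<noteq> 0 \<and> g (n - k) \<noteq> 0}. gmul (f k) (g (n - k)))"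

text \<open>(a0 + theta a1)(b0 + theta b1) = a0 b0 + theta (hat(a0) b1 + a1 b0).\<close>
definition smul :: "sser \<Rightarrow> sser \<Rightarrow> sser" where
  "smul f g = (lmul (fst f) (fst g),
               \<lambda>n. lmul (\<lambda>k. ghat (fst f k)) (snd g) n + lmul (snd f) (fst g) n)"

definition cmul :: "gr \<Rightarrow> sser \<Rightarrow> sser" where
  "cmul c f = (\<lambda>n. gmul c (fst f n), \<lambda>n. gmul (ghat c) (snd f n))"

definition dz :: "lser \<Rightarrow> lser" where
  "dz f = (\<lambda>n. gscale (of_int (n + 1)) (f (n + 1)))"

definition sh :: "int \<Rightarrow> lser \<Rightarrow> lser" where
  "sh m g = (\<lambda>n. g (n - m))"

text \<open>D = d/dtheta + theta d/dz (left derivative): D(f0 + theta f1) = f1 + theta f0'.\<close>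
definition sD :: "sser \<Rightarrow> sser" where
  "sD f = (snd f, dz (fst f))"

text \<open>L_j = - z^(j+1) d/dz - ((j+1)/2) theta z^j d/dtheta.\<close>
definition Lop :: "int \<Rightarrow> sser \<Rightarrow> sser" where
  "Lop j f = (\<lambda>n. - sh (j + 1) (dz (fst f)) n,
              \<lambda>n. - sh (j + 1) (dz (snd f)) n - gscale ((of_int j + 1) / 2) (sh j (snd f) n))"

text \<open>G_(j+1/2) = - z^(j+1) (d/dtheta - theta d/dz).\<close>
definition Gop :: "int \<Rightarrow> sser \<Rightarrow> sser" where
  "Gop j f = (\<lambda>n. - sh (j + 1) (snd f) n, \<lambda>n. sh (j + 1) (dz (fst f)) n)"

definition Yterm :: "(int \<Rightarrow> gr) \<Rightarrow> (int \<Rightarrow> gr) \<Rightarrow> int \<Rightarrow> sser \<Rightarrow> sser" where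
  "Yterm A M j f =
     (\<lambda>n. - fst (cmul (A j) (Lop j f)) n - fst (cmul (M j) (Gop j f)) n,
      \<lambda>n. - snd (cmul (A j) (Lop j f)) n - snd (cmul (M j) (Gop j f)) n)"

text \<open>Sum over j < 0, taken coefficientwise (only finitely many nonzero terms
  for series bounded above in degree).\<close>
definition negsum :: "(int \<Rightarrow> gr) \<Rightarrow> gr" where
  "negsum F = (\<Sum>j\<in>{j. j < 0 \<and> F j \<noteq> 0}. F j)"

definition Yop :: "(int \<Rightarrow> gr) \<Rightarrow> (int \<Rightarrow> gr) \<Rightarrow> sser \<Rightarrow> sser" where
  "Yop A M f = (\<lambda>n. negsum (\<lambda>j. fst (Yterm A M j f) n),
                \<lambda>n. negsum (\<lambda>j. snd (Yterm A M j f) n))"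

text \<open>E_{A,M} = exp(Yop A M), the exponential series taken coefficientwise
  (each coefficient receives finitely many nonzero contributions).\<close>
definition Eop :: "(int \<Rightarrow> gr) \<Rightarrow> (int \<Rightarrow> gr) \<Rightarrow> sser \<Rightarrow> sser" where
  "Eop A M f =
     (\<lambda>n. \<Sum>k\<in>{k. fst ((Yop A M ^^ k) f) n \<noteq> 0}. gscale (inverse (fact k)) (fst ((Yop A M ^^ k) f) n),
      \<lambda>n. \<Sum>k\<in>{k. snd ((Yop A M ^^ k) f) n \<noteq> 0}. gscale (inverse (fact k)) (snd ((Yop A M ^^ k) f) n))"

definition zser :: sser where
  "zser = (\<lambda>n. if n = 1 then gone else 0, \<lambda>n. 0)"

definition thser :: sser where
  "thser = (\<lambda>n. 0, \<lambda>n. if n = 0 then gone else 0)"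

end

theory Submission
  imports Defs "HOL-Computational_Algebra.Formal_Laurent_Series" "HOL-Library.Product_Plus"
begin

notation fls_nth (infixl \<open>$$\<close> 75)


definition ginv :: "nat set \<Rightarrow> nat set \<Rightarrow> nat" where
  "ginv T U = card {(t, u). t \<in> T \<and> u \<in> U \<and> u < t}"

lemma gsign_ginv: "gsign T U = (-1) ^ ginv T U"
  by (simp add: gsign_def ginv_def)

lemma ginv_fin: "finite T \<Longrightarrow> finite U \<Longrightarrow> finite {(t, u). t \<in> T \<and> u \<in> U \<and> u < t}"
  by (rule finite_subset[of _ "T \<times> U"]) auto

lemma ginv_Un_right:
  assumes "finite T" "finite U" "finite V" "U \<inter> V = {}"
  shows "ginv T (U \<union> V) = ginv T U + ginv T V"
proof -
  have "{(t, u). t \<in> T \<and> u \<in> U \<union> V \<and> u < t} =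
        {(t, u). t \<in> T \<and> u \<in> U \<and> u < t} \<union> {(t, u). t \<in> T \<and> u \<in> V \<and> u < t}" by auto
  moreover have "card ({(t, u). t \<in> T \<and> u \<in> U \<and> u < t} \<union> {(t, u). t \<in> T \<and> u \<in> V \<and> u < t})
     = card {(t, u). t \<in> T \<and> u \<in> U \<and> u < t} + card {(t, u). t \<in> T \<and> u \<in> V \<and> u < t}"
    by (rule card_Un_disjoint) (use assms ginv_fin in auto)
  ultimately show ?thesis unfolding ginv_def by simp
qed

lemma ginv_Un_left:
  assumes "finite T" "finite U" "finite V" "T \<inter> U = {}"
  shows "ginv (T \<union> U) V = ginv T V + ginv U V"
proof -
  have "{(t, u). t \<in> T \<union> U \<and> u \<in> V \<and> u < t} =
        {(t, u). t \<in> T \<and> u \<in> V \<and> u < t} \<union> {(t, u). t \<in> U \<and> u \<in> V \<and> u < t}" by auto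
  moreover have "card ({(t, u). t \<in> T \<and> u \<in> V \<and> u < t} \<union> {(t, u). t \<in> U \<and> u \<in> V \<and> u < t})
     = card {(t, u). t \<in> T \<and> u \<in> V \<and> u < t} + card {(t, u). t \<in> U \<and> u \<in> V \<and> u < t}"
    by (rule card_Un_disjoint) (use assms ginv_fin in auto)
  ultimately show ?thesis unfolding ginv_def by simp
qed

lemma ginv_swap:
  assumes "finite T" "finite U" "T \<inter> U = {}"
  shows "ginv T U + ginv U T = card T * card U"
proof -
  let ?A = "{(t, u). t \<in> T \<and> u \<in> U \<and> u < t}"
  let ?B = "{(t, u). t \<in> T \<and> u \<in> U \<and> t < u}"
  have e: "{(u, t). u \<in> U \<and> t \<in> T \<and> t < u} = prod.swap ` ?B"
    by (auto simp: image_iff)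
  have "ginv U T = card ?B"
    unfolding ginv_def e by (rule card_image) (simp add: inj_on_def)
  moreover have "T \<times> U = ?A \<union> ?B"
    using assms(3) by (auto simp: linorder_neq_iff) 
  moreover have "card (?A \<union> ?B) = card ?A + card ?B"
    by (rule card_Un_disjoint) (use assms in \<open>auto intro: finite_subset[of _ "T \<times> U"]\<close>)
  ultimately show ?thesis unfolding ginv_def by (metis card_cartesian_product)
qed

lemma gsign_empty1[simp]: "gsign {} U = 1" by (simp add: gsign_def)
lemma gsign_empty2[simp]: "gsign T {} = 1" by (simp add: gsign_def)

lemma gsign_assoc:
  assumes "finite T" "finite V" "finite W" "T \<inter> V = {}" "T \<inter> W = {}" "V \<inter> W = {}"
  shows "gsign (T \<union> V) W * gsign T V = gsign T (V \<union> W) * gsign V W"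
  using assms by (simp add: gsign_ginv ginv_Un_left ginv_Un_right power_add[symmetric] add_ac)


lemma gmul_fin: "finite S \<Longrightarrow> gmul a b S = (\<Sum>T\<in>Pow S. gsign T (S - T) * a T * b (S - T))"
  by (simp add: gmul_def)

lemma gmul_assoc: "gmul (gmul a b) c = gmul a (gmul b c)"
proof (rule ext)
  fix S :: "nat set"
  show "gmul (gmul a b) c S = gmul a (gmul b c) S"
  proof (cases "finite S")
    case False then show ?thesis by (simp add: gmul_def)
  next
    case fin: True
    have "gmul (gmul a b) c S = (\<Sum>U\<in>Pow S. \<Sum>T\<in>Pow U.
        gsign U (S - U) * gsign T (U - T) * a T * b (U - T) * c (S - U))"
      unfolding gmul_fin[OF fin]
    proof (rule sum.cong[OF refl])
      fix U assume "U \<in> Pow S"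
      then have "finite U" using fin finite_subset by auto
      then show "gsign U (S - U) * gmul a b U * c (S - U) = (\<Sum>T\<in>Pow U.
        gsign U (S - U) * gsign T (U - T) * a T * b (U - T) * c (S - U))"
        by (simp add: gmul_fin sum_distrib_left sum_distrib_right mult_ac)
    qed
    also have "\<dots> = (\<Sum>(U,T)\<in>Sigma (Pow S) Pow.
        gsign U (S - U) * gsign T (U - T) * a T * b (U - T) * c (S - U))"
      by (rule sum.Sigma) (use fin finite_subset in auto)
    finally have L: "gmul (gmul a b) c S = \<dots>" .
    have "gmul a (gmul b c) S = (\<Sum>T\<in>Pow S. \<Sum>V\<in>Pow (S - T).
        gsign T (S - T) * gsign V (S - T - V) * a T * b V * c (S - T - V))"
      unfolding gmul_fin[OF fin]
    proof (rule sum.cong[OF refl])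
      fix T assume "T \<in> Pow S"
      have "finite (S - T)" using fin by auto
      then show "gsign T (S - T) * a T * gmul b c (S - T) = (\<Sum>V\<in>Pow (S - T).
        gsign T (S - T) * gsign V (S - T - V) * a T * b V * c (S - T - V))"
        by (simp add: gmul_fin sum_distrib_left sum_distrib_right mult_ac)
    qed
    also have "\<dots> = (\<Sum>(T,V)\<in>Sigma (Pow S) (\<lambda>T. Pow (S - T)).
        gsign T (S - T) * gsign V (S - T - V) * a T * b V * c (S - T - V))"
      by (rule sum.Sigma) (use fin in auto)
    finally have R: "gmul a (gmul b c) S = \<dots>" .
    have "(\<Sum>(T,V)\<in>Sigma (Pow S) (\<lambda>T. Pow (S - T)).
        gsign T (S - T) * gsign V (S - T - V) * a T * b V * c (S - T - V)) =
        (\<Sum>(U,T)\<in>Sigma (Pow S) Pow.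
        gsign U (S - U) * gsign T (U - T) * a T * b (U - T) * c (S - U))"
    proof (rule sum.reindex_bij_witness[of _ "\<lambda>(U,T). (T, U - T)" "\<lambda>(T,V). (T \<union> V, T)"])
      fix p assume "p \<in> Sigma (Pow S) (\<lambda>T. Pow (S - T))"
      then obtain T V where p: "p = (T, V)" "T \<subseteq> S" "V \<subseteq> S - T" by auto
      have fT: "finite T" "finite V" "finite (S - T - V)" using p fin by (auto intro: finite_subset)
      have e1: "T \<union> V - T = V" "S - (T \<union> V) = S - T - V" using p by auto
      have e2: "S - T = V \<union> (S - T - V)" using p by auto
      have "gsign (T \<union> V) (S - T - V) * gsign T V = gsign T (V \<union> (S - T - V)) * gsign V (S - T - V)"
        by (rule gsign_assoc) (use fT p in auto)
      then have "gsign (T \<union> V) (S - T - V) * gsign T V = gsign T (S - T) * gsign V (S - T - V)"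
        using e2 by simp
      then show "(case (case p of (T, V) \<Rightarrow> (T \<union> V, T)) of (U, T) \<Rightarrow>
            gsign U (S - U) * gsign T (U - T) * a T * b (U - T) * c (S - U)) =
          (case p of (T, V) \<Rightarrow> gsign T (S - T) * gsign V (S - T - V) * a T * b V * c (S - T - V))"
        using p e1 by (simp add: mult_ac)
    qed auto
    then show ?thesis using L R by simp
  qed
qed


lemma gsign_sq: "gsign T U * gsign T U = 1"
  by (simp add: gsign_def power_mult_distrib[symmetric])

lemma gsign_swap:
  assumes "finite T" "finite U" "T \<inter> U = {}"
  shows "gsign T U = (-1) ^ (card T * card U) * gsign U T"
proof -
  have "gsign T U * gsign U T = (-1) ^ (card T * card U)"
    using ginv_swap[OF assms] by (simp add: gsign_ginv power_add[symmetric])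
  then have "gsign T U * gsign U T * gsign U T = (-1) ^ (card T * card U) * gsign U T" by simp
  then show ?thesis by (simp add: mult.assoc gsign_sq)
qed

lemma gmul_add_left: "gmul (a + b) c = gmul a c + gmul b c"
  by (rule ext) (simp add: gmul_def sum.distrib algebra_simps)
lemma gmul_add_right: "gmul a (b + c) = gmul a b + gmul a c"
  by (rule ext) (simp add: gmul_def sum.distrib algebra_simps)
lemma gmul_zero_left[simp]: "gmul 0 c = 0"
  by (rule ext) (simp add: gmul_def)
lemma gmul_zero_right[simp]: "gmul a 0 = 0"
  by (rule ext) (simp add: gmul_def)
lemma gmul_zero_left'[simp]: "gmul (\<lambda>S. 0) c = 0"
  by (rule ext) (simp add: gmul_def)
lemma gmul_zero_right'[simp]: "gmul a (\<lambda>S. 0) = 0"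
  by (rule ext) (simp add: gmul_def)
lemma gmul_uminus_left: "gmul (- a) c = - gmul a c"
  by (rule ext) (simp add: gmul_def sum_negf)
lemma gmul_uminus_right: "gmul a (- c) = - gmul a c"
  by (rule ext) (simp add: gmul_def sum_negf)
lemma gmul_gscale_left: "gmul (gscale k a) c = gscale k (gmul a c)"
  by (rule ext) (simp add: gmul_def gscale_def sum_distrib_left algebra_simps)
lemma gmul_gscale_right: "gmul a (gscale k c) = gscale k (gmul a c)"
  by (rule ext) (simp add: gmul_def gscale_def sum_distrib_left algebra_simps)

lemma gmul_gone_left: "gmul gone a = (\<lambda>S. if finite S then a S else 0)"
proof (rule ext)
  fix S show "gmul gone a S = (if finite S then a S else 0)"
  proof (cases "finite S")
    case True
    have "gmul gone a S = (\<Sum>T\<in>Pow S. if T = {} then a S else 0)"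
      unfolding gmul_fin[OF True] by (rule sum.cong) (auto simp: gone_def)
    also have "\<dots> = a S" using sum.delta[of "Pow S" "{}" "\<lambda>_. a S"] True by simp
    finally show ?thesis using True by simp
  qed (simp add: gmul_def)
qed

lemma gmul_gone_right: "gmul a gone = (\<lambda>S. if finite S then a S else 0)"
proof (rule ext)
  fix S show "gmul a gone S = (if finite S then a S else 0)"
  proof (cases "finite S")
    case True
    have "gmul a gone S = (\<Sum>T\<in>Pow S. if T = S then a S else 0)"
      unfolding gmul_fin[OF True] by (rule sum.cong) (auto simp: gone_def)
    also have "\<dots> = a S" using True by simp
    finally show ?thesis using True by simp
  qed (simp add: gmul_def)
qed

lemma ghat_gmul: "ghat (gmul a b) = gmul (ghat a) (ghat b)"
proof (rule ext)
  fix S show "ghat (gmul a b) S = gmul (ghat a) (ghat b) S"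
  proof (cases "finite S")
    case True
    show ?thesis unfolding ghat_def gmul_fin[OF True] sum_distrib_left
    proof (rule sum.cong[OF refl])
      fix T assume "T \<in> Pow S"
      then have "card S = card T + card (S - T)" using True
        by (metis Diff_partition PowD card_Un_disjoint Diff_disjoint finite_Diff finite_subset)
      then show "(-1) ^ card S * (gsign T (S - T) * a T * b (S - T)) =
          gsign T (S - T) * ((-1) ^ card T * a T) * ((-1) ^ card (S - T) * b (S - T))"
        by (simp add: power_add)
    qed
  qed (simp add: gmul_def ghat_def)
qed

lemma gmul_swap_sum:
  assumes "finite S"
  shows "gmul b a S = (\<Sum>T\<in>Pow S. gsign (S - T) T * b (S - T) * a T)"
  unfolding gmul_fin[OF assms]
proof (rule sum.reindex_bij_witness[of _ "\<lambda>T. S - T" "\<lambda>T. S - T"])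
qed (auto simp: double_diff)

lemma gmul_comm_even:
  assumes "geven a"
  shows "gmul a b = gmul b a"
proof (rule ext)
  fix S show "gmul a b S = gmul b a S"
  proof (cases "finite S")
    case True
    show ?thesis unfolding gmul_swap_sum[OF True, of b a] gmul_fin[OF True, of a b]
    proof (rule sum.cong[OF refl])
      fix T assume T: "T \<in> Pow S"
      have f: "finite T" "finite (S - T)" using T True by (auto intro: finite_subset)
      show "gsign T (S - T) * a T * b (S - T) = gsign (S - T) T * b (S - T) * a T"
      proof (cases "a T = 0")
        case False
        then have "even (card T)" using assms by (simp add: geven_def)
        then show ?thesis using gsign_swap[of T "S - T"] f by (simp add: mult_ac)
      qed simp
    qed
  qed (simp add: gmul_def)
qed

lemma gmul_comm_odd:
  assumes "godd a"
  shows "gmul a b = gmul (ghat b) a"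
proof (rule ext)
  fix S show "gmul a b S = gmul (ghat b) a S"
  proof (cases "finite S")
    case True
    show ?thesis unfolding gmul_swap_sum[OF True, of "ghat b" a] gmul_fin[OF True, of a b]
    proof (rule sum.cong[OF refl])
      fix T assume T: "T \<in> Pow S"
      have f: "finite T" "finite (S - T)" using T True by (auto intro: finite_subset)
      show "gsign T (S - T) * a T * b (S - T) = gsign (S - T) T * ghat b (S - T) * a T"
      proof (cases "a T = 0")
        case False
        then have "odd (card T)" using assms by (simp add: godd_def)
        then show ?thesis using gsign_swap[of T "S - T"] f by (simp add: mult_ac ghat_def power_mult)
      qed simp
    qed
  qed (simp add: gmul_def)
qed

lemma ghat_even: "geven a \<Longrightarrow> ghat a = a"
  by (rule ext) (auto simp: ghat_def geven_def)
lemma ghat_odd: "godd a \<Longrightarrow> ghat a = - a"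
proof (rule ext)
  fix S assume "godd a"
  then show "ghat a S = (- a) S"
    by (cases "a S = 0") (auto simp: godd_def ghat_def neg_one_odd_power)
qed
lemma ghat_ghat[simp]: "ghat (ghat a) = a"
  by (rule ext) (simp add: ghat_def)


typedef gg = "{a :: gr. \<forall>S. infinite S \<longrightarrow> a S = 0}" morphisms Rg Ag
  by (rule exI[of _ 0]) simp

setup_lifting type_definition_gg

instantiation gg :: ring_1
begin
lift_definition zero_gg :: gg is "0" by simp
lift_definition one_gg :: gg is gone by (auto simp: gone_def)
lift_definition plus_gg :: "gg \<Rightarrow> gg \<Rightarrow> gg" is "\<lambda>a b. a + b" by simp
lift_definition minus_gg :: "gg \<Rightarrow> gg \<Rightarrow> gg" is "\<lambda>a b. a - b" by simp
lift_definition uminus_gg :: "gg \<Rightarrow> gg" is "\<lambda>a. - a" by simp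
lift_definition times_gg :: "gg \<Rightarrow> gg \<Rightarrow> gg" is gmul by (simp add: gmul_def)
instance
proof
  fix a b c :: gg
  show "a * b * c = a * (b * c)" by transfer (rule gmul_assoc)
  show "a + b + c = a + (b + c)" by transfer (simp add: add.assoc)
  show "a + b = b + a" by transfer (simp add: add.commute)
  show "0 + a = a" by transfer simp
  show "- a + a = 0" by transfer simp
  show "a - b = a + - b" by transfer simp
  show "(a + b) * c = a * c + b * c" by transfer (rule gmul_add_left)
  show "a * (b + c) = a * b + a * c" by transfer (rule gmul_add_right)
  show "1 * a = a" by transfer (auto simp: gmul_gone_left)
  show "a * 1 = a" by transfer (auto simp: gmul_gone_right)
  show "(0::gg) \<noteq> 1" by transfer (auto simp: gone_def fun_eq_iff)
qed
end

lemma Rg_inject': "Rg a = Rg b \<longleftrightarrow> a = b" by (simp add: Rg_inject)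
lemma Rg_0[simp]: "Rg 0 = 0" by (simp add: zero_gg.rep_eq)
lemma Rg_eq0[simp]: "Rg a = 0 \<longleftrightarrow> a = 0"
  by (metis Rg_0 Rg_inject)
lemma Rg_1: "Rg 1 = gone" by (simp add: one_gg.rep_eq)
lemma Rg_add: "Rg (a + b) = Rg a + Rg b" by (simp add: plus_gg.rep_eq)
lemma Rg_uminus: "Rg (- a) = - Rg a" by (simp add: uminus_gg.rep_eq)
lemma Rg_minus: "Rg (a - b) = Rg a - Rg b" by (simp add: minus_gg.rep_eq)
lemma Rg_mult: "Rg (a * b) = gmul (Rg a) (Rg b)" by (simp add: times_gg.rep_eq)
lemma Rg_sum: "Rg (sum f A) = (\<Sum>x\<in>A. Rg (f x))"
  by (induction A rule: infinite_finite_induct) (auto simp: Rg_add)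

lift_definition ghg :: "gg \<Rightarrow> gg" is ghat by (simp add: ghat_def)
lift_definition ccg :: "complex \<Rightarrow> gg" is "\<lambda>c. gscale c gone" by (auto simp: gscale_def gone_def)

definition evg :: "gg \<Rightarrow> bool" where "evg a \<longleftrightarrow> geven (Rg a)"
definition oddg :: "gg \<Rightarrow> bool" where "oddg a \<longleftrightarrow> godd (Rg a)"

lemma ghg_mult: "ghg (a * b) = ghg a * ghg b" by transfer (rule ghat_gmul)
lemma ghg_add: "ghg (a + b) = ghg a + ghg b" by transfer (auto simp: ghat_def fun_eq_iff algebra_simps)
lemma ghg_uminus: "ghg (- a) = - ghg a" by transfer (auto simp: ghat_def fun_eq_iff algebra_simps)
lemma ghg_minus: "ghg (a - b) = ghg a - ghg b" by transfer (auto simp: ghat_def fun_eq_iff algebra_simps)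
lemma ghg_0[simp]: "ghg 0 = 0" by transfer (auto simp: ghat_def fun_eq_iff)
lemma ghg_1[simp]: "ghg 1 = 1" by transfer (auto simp: ghat_def fun_eq_iff gone_def)
lemma ghg_ghg[simp]: "ghg (ghg a) = a" by transfer simp
lemma ghg_eq0[simp]: "ghg a = 0 \<longleftrightarrow> a = 0" by (metis ghg_0 ghg_ghg)
lemma ghg_sum: "ghg (sum f A) = (\<Sum>x\<in>A. ghg (f x))"
  by (induction A rule: infinite_finite_induct) (auto simp: ghg_add)
lemma ghg_ccg[simp]: "ghg (ccg c) = ccg c" by transfer (auto simp: ghat_def fun_eq_iff gone_def gscale_def)

lemma gone_fin: "\<forall>S. infinite S \<longrightarrow> gone S = 0" by (auto simp: gone_def)
lemma gmul_gone_left': "\<forall>S. infinite S \<longrightarrow> a S = 0 \<Longrightarrow> gmul gone a = a"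
  unfolding gmul_gone_left by (auto simp: fun_eq_iff)
lemma gmul_gone_right': "\<forall>S. infinite S \<longrightarrow> a S = 0 \<Longrightarrow> gmul a gone = a"
  unfolding gmul_gone_right by (auto simp: fun_eq_iff)
lemma gscale_gscale: "gscale c (gscale d a) = gscale (c * d) a"
  by (simp add: gscale_def fun_eq_iff mult.assoc)

lemma Rg_ccg_mult: "Rg (ccg c * a) = gscale c (Rg a)"
  by transfer (simp only: gmul_gscale_left gmul_gone_left')
lemma ccg_mult_ccg: "ccg c * ccg d = ccg (c * d)"
  by transfer (simp only: gmul_gscale_left gmul_gscale_right gmul_gone_left'[OF gone_fin] gscale_gscale mult.commute)
lemma ccg_central: "ccg c * a = a * ccg c"
  by transfer (simp only: gmul_gscale_left gmul_gscale_right gmul_gone_left' gmul_gone_right')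
lemma ccg_add: "ccg (c + d) = ccg c + ccg d"
  by transfer (auto simp: gscale_def fun_eq_iff algebra_simps)
lemma ccg_uminus: "ccg (- c) = - ccg c"
  by transfer (auto simp: gscale_def fun_eq_iff algebra_simps)
lemma ccg_1: "ccg 1 = 1"
  by transfer (auto simp: gscale_def fun_eq_iff)
lemma ccg_0: "ccg 0 = 0"
  by transfer (auto simp: gscale_def fun_eq_iff)

lemma of_nat_ccg: "(of_nat n :: gg) = ccg (of_nat n)"
  by (induction n) (auto simp: ccg_0 ccg_add ccg_1 add.commute)
lemma of_int_ccg: "(of_int k :: gg) = ccg (of_int k)"
proof (cases k rule: int_cases)
  case (nonneg n) then show ?thesis by (simp add: of_nat_ccg)
next
  case (neg n) then show ?thesis
    by (simp add: of_nat_ccg ccg_uminus ccg_add ccg_1 del: of_nat_Suc)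
qed

lemma Rg_of_int_mult: "Rg (of_int k * a) = gscale (of_int k) (Rg a)"
  by (simp add: of_int_ccg Rg_ccg_mult)

lemma evg_comm: "evg a \<Longrightarrow> a * b = b * a"
  unfolding evg_def by transfer (rule gmul_comm_even)
lemma oddg_comm: "oddg a \<Longrightarrow> a * b = ghg b * a"
  unfolding oddg_def by transfer (rule gmul_comm_odd)
lemma evg_ghg: "evg a \<Longrightarrow> ghg a = a"
  unfolding evg_def by transfer (rule ghat_even)
lemma oddg_ghg: "oddg a \<Longrightarrow> ghg a = - a"
  unfolding oddg_def by transfer (rule ghat_odd)

lemma evg_0[simp]: "evg 0" by (simp add: evg_def geven_def)
lemma oddg_0[simp]: "oddg 0" by (simp add: oddg_def godd_def)
lemma evg_ccg_mult: "evg a \<Longrightarrow> evg (ccg c * a)"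
  by (simp add: evg_def geven_def Rg_ccg_mult gscale_def)
lemma oddg_ccg_mult: "oddg a \<Longrightarrow> oddg (ccg c * a)"
  by (simp add: oddg_def godd_def Rg_ccg_mult gscale_def)



type_synonym L = "gg fls"

lemma mulnth_gen:
  fixes f g :: "'a::ring_1 fls"
  assumes "finite I" "\<And>i. f $$ i \<noteq> 0 \<Longrightarrow> g $$ (n - i) \<noteq> 0 \<Longrightarrow> i \<in> I"
  shows "(f * g) $$ n = (\<Sum>i\<in>I. f $$ i * g $$ (n - i))"
proof -
  let ?J = "{i. f $$ i \<noteq> 0 \<and> g $$ (n - i) \<noteq> 0}"
  have J1: "?J \<subseteq> {fls_subdegree f..n - fls_subdegree g}"
    using fls_subdegree_leI by fastforce
  have "(f * g) $$ n = (\<Sum>i = fls_subdegree f..n - fls_subdegree g. f $$ i * g $$ (n - i))"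
    by (rule fls_times_nth(2))
  also have "\<dots> = (\<Sum>i\<in>?J. f $$ i * g $$ (n - i))"
    by (rule sum.mono_neutral_right) (use J1 in auto)
  also have "\<dots> = (\<Sum>i\<in>I. f $$ i * g $$ (n - i))"
    by (rule sum.mono_neutral_left) (use assms in auto)
  finally show ?thesis .
qed

definition hatL :: "L \<Rightarrow> L" where "hatL f = Abs_fls (\<lambda>n. ghg (f $$ n))"

lemma hatL_nth[simp]: "hatL f $$ n = ghg (f $$ n)"
  unfolding hatL_def by (rule nth_Abs_fls_lower_bound[of "fls_subdegree f"]) simp

lemma hatL_add: "hatL (f + g) = hatL f + hatL g" by (rule fls_eqI) (simp add: ghg_add)
lemma hatL_uminus: "hatL (- f) = - hatL f" by (rule fls_eqI) (simp add: ghg_uminus)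
lemma hatL_minus: "hatL (f - g) = hatL f - hatL g" by (rule fls_eqI) (simp add: ghg_minus)
lemma hatL_0[simp]: "hatL 0 = 0" by (rule fls_eqI) simp
lemma hatL_1[simp]: "hatL 1 = 1" by (rule fls_eqI) (simp add: fls_one_nth)
lemma hatL_hatL[simp]: "hatL (hatL f) = f" by (rule fls_eqI) simp
lemma hatL_const: "hatL (fls_const c) = fls_const (ghg c)" by (rule fls_eqI) simp

lemma hatL_mult: "hatL (f * g) = hatL f * hatL g"
proof (rule fls_eqI)
  fix n
  let ?I = "{fls_subdegree f..n - fls_subdegree g}"
  have "(f * g) $$ n = (\<Sum>i\<in>?I. f $$ i * g $$ (n - i))"
    by (rule mulnth_gen) (use fls_subdegree_leI in fastforce)+
  moreover have "(hatL f * hatL g) $$ n = (\<Sum>i\<in>?I. hatL f $$ i * hatL g $$ (n - i))"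
    by (rule mulnth_gen) (use fls_subdegree_leI in fastforce)+
  ultimately show "hatL (f * g) $$ n = (hatL f * hatL g) $$ n"
    by (simp add: ghg_sum ghg_mult)
qed

lemma mult_twist:
  fixes f g h :: "'a::ring_1 fls"
  assumes "\<And>i j. f $$ i * g $$ j = h $$ j * f $$ i" "\<And>j. h $$ j = 0 \<longleftrightarrow> g $$ j = 0"
  shows "f * g = h * f"
proof (rule fls_eqI)
  fix n
  let ?I = "{fls_subdegree f..n - fls_subdegree g}"
  have "(f * g) $$ n = (\<Sum>i\<in>?I. f $$ i * g $$ (n - i))"
    by (rule mulnth_gen) (use fls_subdegree_leI in fastforce)+
  moreover have "(h * f) $$ n = (\<Sum>i\<in>(\<lambda>i. n - i) ` ?I. h $$ i * f $$ (n - i))"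
  proof (rule mulnth_gen)
    fix i assume "h $$ i \<noteq> 0" "f $$ (n - i) \<noteq> 0"
    then have "fls_subdegree g \<le> i" "fls_subdegree f \<le> n - i" using assms(2) fls_subdegree_leI by auto
    then show "i \<in> (\<lambda>i. n - i) ` ?I" by (auto simp: image_iff intro!: bexI[of _ "n - i"])
  qed simp
  moreover have "(\<Sum>i\<in>(\<lambda>i. n - i) ` ?I. h $$ i * f $$ (n - i)) = (\<Sum>i\<in>?I. h $$ (n - i) * f $$ i)"
    by (subst sum.reindex) (auto simp: inj_on_def)
  ultimately show "(f * g) $$ n = (h * f) $$ n" using assms(1) by simp
qed

definition evL :: "L \<Rightarrow> bool" where "evL f \<longleftrightarrow> (\<forall>n. evg (f $$ n))"
definition oddL :: "L \<Rightarrow> bool" where "oddL f \<longleftrightarrow> (\<forall>n. oddg (f $$ n))"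

lemma evL_comm: "evL p \<Longrightarrow> p * x = x * p"
  by (rule mult_twist) (auto simp: evL_def intro: evg_comm)
lemma oddL_comm: "oddL p \<Longrightarrow> p * x = hatL x * p"
  by (rule mult_twist) (auto simp: oddL_def oddg_comm)
lemma evL_hat: "evL p \<Longrightarrow> hatL p = p"
  by (rule fls_eqI) (simp add: evL_def evg_ghg)
lemma oddL_hat: "oddL p \<Longrightarrow> hatL p = - p"
  by (rule fls_eqI) (simp add: oddL_def oddg_ghg)

definition dZ :: "L \<Rightarrow> L" where "dZ f = - fls_shift (-2) (fls_deriv f)"

lemma dZ_nth: "dZ f $$ k = of_int (1 - k) * f $$ (k - 1)"
proof -
  have "dZ f $$ k = - (of_int (k - 1) * f $$ (k - 1))" by (simp add: dZ_def algebra_simps)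
  also have "\<dots> = of_int (1 - k) * f $$ (k - 1)"
    by (simp add: of_int_diff algebra_simps)
  finally show ?thesis .
qed

lemma dZ_mult: "dZ (f * g) = dZ f * g + f * dZ g"
  unfolding dZ_def by (simp add: fls_shifted_times_simps algebra_simps fls_shift_plus)
lemma dZ_add: "dZ (f + g) = dZ f + dZ g" by (rule fls_eqI) (simp add: dZ_nth algebra_simps)
lemma dZ_uminus: "dZ (- f) = - dZ f" by (rule fls_eqI) (simp add: dZ_nth algebra_simps)
lemma dZ_minus: "dZ (f - g) = dZ f - dZ g" by (rule fls_eqI) (simp add: dZ_nth algebra_simps)
lemma dZ_0[simp]: "dZ 0 = 0" by (rule fls_eqI) (simp add: dZ_nth)
lemma dZ_const[simp]: "dZ (fls_const c) = 0" by (rule fls_eqI) (simp add: dZ_nth)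
lemma dZ_1[simp]: "dZ 1 = 0" by (rule fls_eqI) (simp add: dZ_nth fls_one_nth)

lemma ghg_of_int[simp]: "ghg (of_int k) = of_int k" by (simp add: of_int_ccg)

lemma dZ_hatL: "dZ (hatL f) = hatL (dZ f)"
  by (rule fls_eqI) (simp only: dZ_nth hatL_nth ghg_mult ghg_of_int)

lemma evL_dZ: "evL f \<Longrightarrow> evL (dZ f)"
  by (simp add: evL_def dZ_nth of_int_ccg evg_ccg_mult)
lemma oddL_dZ: "oddL f \<Longrightarrow> oddL (dZ f)"
  by (simp add: oddL_def dZ_nth of_int_ccg oddg_ccg_mult)

definition fc :: "complex \<Rightarrow> L" where "fc c = fls_const (ccg c)"

lemma fc_central: "fc c * x = x * fc c"
  unfolding fc_def by (rule mult_twist) (auto simp: ccg_central)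
lemma hatL_fc[simp]: "hatL (fc c) = fc c" by (simp add: fc_def hatL_const)
lemma dZ_fc_mult: "dZ (fc c * f) = fc c * dZ f" by (simp add: dZ_mult fc_def)
lemma fc_mult: "fc c * fc d = fc (c * d)" by (simp add: fc_def fls_const_mult_const ccg_mult_ccg)
lemma fc_add: "fc (c + d) = fc c + fc d" by (rule fls_eqI) (simp add: fc_def ccg_add)
lemma fc_1: "fc 1 = 1" by (simp add: fc_def ccg_1 fls_const_1)



type_synonym SS = "L \<times> L"

definition sm :: "SS \<Rightarrow> SS \<Rightarrow> SS" where
  "sm F G = (fst F * fst G, hatL (fst F) * snd G + snd F * fst G)"
definition Dd :: "SS \<Rightarrow> SS" where "Dd F = (snd F, dZ (fst F))"
definition Yv :: "L \<Rightarrow> L \<Rightarrow> L \<Rightarrow> SS \<Rightarrow> SS" where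
  "Yv p m q F = (p * dZ (fst F) + m * snd F, p * dZ (snd F) + m * dZ (fst F) + q * snd F)"
definition hv :: "L \<Rightarrow> L \<Rightarrow> SS" where "hv m q = (q, dZ m)"
definition sc :: "complex \<Rightarrow> SS \<Rightarrow> SS" where "sc c F = (fc c * fst F, fc c * snd F)"
definition evS :: "SS \<Rightarrow> bool" where "evS H \<longleftrightarrow> evL (fst H) \<and> oddL (snd H)"

lemma sm_assoc: "sm (sm F G) H = sm F (sm G H)"
  by (simp add: sm_def hatL_mult hatL_add algebra_simps)
lemma sm_add_left: "sm (F + G) H = sm F H + sm G H"
  by (simp add: sm_def hatL_add algebra_simps)
lemma sm_add_right: "sm H (F + G) = sm H F + sm H G"
  by (simp add: sm_def algebra_simps)
lemma sm_0_left[simp]: "sm 0 H = 0" by (simp add: sm_def zero_prod_def)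
lemma sm_0_right[simp]: "sm H 0 = 0" by (simp add: sm_def zero_prod_def)
lemma sm_sum_left: "sm (\<Sum>i\<in>A. F i) H = (\<Sum>i\<in>A. sm (F i) H)"
  by (induction A rule: infinite_finite_induct) (auto simp: sm_add_left)
lemma sm_sum_right: "sm H (\<Sum>i\<in>A. F i) = (\<Sum>i\<in>A. sm H (F i))"
  by (induction A rule: infinite_finite_induct) (auto simp: sm_add_right)

lemma sm_evS_comm:
  assumes "evS H" shows "sm H F = sm F H"
proof -
  obtain h0 h1 where H: "H = (h0, h1)" by fastforce
  obtain f0 f1 where F: "F = (f0, f1)" by fastforce
  have e: "evL h0" "oddL h1" using assms H by (auto simp: evS_def)
  have "h0 * f0 = f0 * h0" "h0 * f1 = f1 * h0" using evL_comm[OF e(1)] by auto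
  moreover have "h1 * f0 = hatL f0 * h1" using oddL_comm[OF e(2)] by auto
  moreover have "hatL h0 = h0" using evL_hat[OF e(1)] .
  ultimately show ?thesis by (simp add: H F sm_def add.commute)
qed

lemma sm_evS_assoc:
  assumes "evS H" shows "sm H (sm A B) = sm A (sm H B)"
  by (metis sm_assoc sm_evS_comm[OF assms])

lemma sc_add: "sc c (F + G) = sc c F + sc c G" by (simp add: sc_def algebra_simps)
lemma sc_0[simp]: "sc c 0 = 0" by (simp add: sc_def zero_prod_def)
lemma sc_sum: "sc c (\<Sum>i\<in>A. F i) = (\<Sum>i\<in>A. sc c (F i))"
  by (induction A rule: infinite_finite_induct) (auto simp: sc_add)
lemma sc_plus: "sc (c + d) F = sc c F + sc d F" by (simp add: sc_def fc_add algebra_simps)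
lemma sc_zero[simp]: "sc 0 F = 0" by (simp add: sc_def fc_def ccg_0 zero_prod_def)
lemma sc_one[simp]: "sc 1 F = F" by (simp add: sc_def fc_1)
lemma sc_sc: "sc c (sc d F) = sc (c * d) F" by (simp add: sc_def mult.assoc[symmetric] fc_mult)
lemma sm_sc_left: "sm (sc c F) G = sc c (sm F G)"
  by (simp add: sc_def sm_def hatL_mult algebra_simps)
lemma sm_sc_right: "sm F (sc c G) = sc c (sm F G)"
proof -
  have "\<And>x y. x * (fc c * y) = fc c * (x * y)"
    by (metis fc_central mult.assoc)
  then show ?thesis by (simp add: sc_def sm_def algebra_simps)
qed

lemma Dd_add: "Dd (F + G) = Dd F + Dd G" by (simp add: Dd_def dZ_add)
lemma Dd_0[simp]: "Dd 0 = 0" by (simp add: Dd_def zero_prod_def)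
lemma Dd_sum: "Dd (\<Sum>i\<in>A. F i) = (\<Sum>i\<in>A. Dd (F i))"
  by (induction A rule: infinite_finite_induct) (auto simp: Dd_add)
lemma Dd_sc: "Dd (sc c F) = sc c (Dd F)" by (simp add: Dd_def sc_def dZ_fc_mult)

lemma Yv_add: "Yv p m q (F + G) = Yv p m q F + Yv p m q G" by (simp add: Yv_def dZ_add algebra_simps)
lemma Yv_0[simp]: "Yv p m q 0 = 0" by (simp add: Yv_def zero_prod_def)
lemma Yv_sum: "Yv p m q (\<Sum>i\<in>A. F i) = (\<Sum>i\<in>A. Yv p m q (F i))"
  by (induction A rule: infinite_finite_induct) (auto simp: Yv_add)
lemma Yv_sc: "Yv p m q (sc c F) = sc c (Yv p m q F)"
proof -
  have "\<And>x y. x * (fc c * y) = fc c * (x * y)"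
    by (metis fc_central mult.assoc)
  then show ?thesis by (simp add: Yv_def sc_def dZ_fc_mult algebra_simps)
qed

lemma Yv_leibniz:
  assumes p: "evL p" and m: "oddL m" and q: "evL q"
  shows "Yv p m q (sm F G) = sm (Yv p m q F) G + sm F (Yv p m q G)"
proof -
  obtain f0 f1 where F: "F = (f0, f1)" by fastforce
  obtain g0 g1 where G: "G = (g0, g1)" by fastforce
  have cp: "\<And>x X. p * (x * X) = x * (p * X)" by (metis evL_comm[OF p] mult.assoc)
  have cq: "\<And>x X. q * (x * X) = x * (q * X)" by (metis evL_comm[OF q] mult.assoc)
  have cm: "\<And>x X. m * (x * X) = hatL x * (m * X)" by (metis oddL_comm[OF m] mult.assoc)
  note cp' = cp[of f0] cp[of "hatL f0"] cp[of f1]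
  note cq' = cq[of "hatL f0"]
  note cm' = cm[of f0] cm[of "hatL f0"] cm[of "hatL f1"]
  have hp: "hatL p = p" using evL_hat[OF p] .
  have hm: "hatL m = - m" using oddL_hat[OF m] .
  show ?thesis
    by (simp add: F G Yv_def sm_def dZ_mult dZ_add dZ_hatL hatL_mult hatL_add hp hm
        algebra_simps cp' cq' cm')
qed

lemma Dd_Yv:
  assumes q: "evL q" and pq: "dZ p = q + q"
  shows "Dd (Yv p m q G) = Yv p m q (Dd G) + sm (hv m q) (Dd G)"
proof -
  obtain g0 g1 where G: "G = (g0, g1)" by fastforce
  show ?thesis using evL_hat[OF q]
    by (simp add: G Yv_def sm_def Dd_def hv_def dZ_mult dZ_add pq algebra_simps)
qed

lemma evS_hv: "evL q \<Longrightarrow> oddL m \<Longrightarrow> evS (hv m q)"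
  by (simp add: evS_def hv_def oddL_dZ)

lemma pascal_sum:
  fixes g :: "nat \<Rightarrow> nat \<Rightarrow> SS"
  shows "(\<Sum>i\<le>k. sc (of_nat (k choose i)) (g (Suc i) (k - i) + g i (Suc k - i))) =
         (\<Sum>i\<le>Suc k. sc (of_nat (Suc k choose i)) (g i (Suc k - i)))"
proof -
  have A: "(\<Sum>i\<le>k. sc (of_nat (k choose i)) (g i (Suc k - i))) =
        (\<Sum>i\<le>Suc k. sc (of_nat (k choose i)) (g i (Suc k - i)))"
    by (simp add: binomial_eq_0)
  also have "\<dots> = g 0 (Suc k) + (\<Sum>i\<le>k. sc (of_nat (k choose Suc i)) (g (Suc i) (k - i)))"
    by (subst sum.atMost_Suc_shift) simp
  finally have A': "(\<Sum>i\<le>k. sc (of_nat (k choose i)) (g i (Suc k - i))) =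
      g 0 (Suc k) + (\<Sum>i\<le>k. sc (of_nat (k choose Suc i)) (g (Suc i) (k - i)))" .
  have "(\<Sum>i\<le>Suc k. sc (of_nat (Suc k choose i)) (g i (Suc k - i))) =
      g 0 (Suc k) + (\<Sum>i\<le>k. sc (of_nat (Suc k choose Suc i)) (g (Suc i) (k - i)))"
    by (subst sum.atMost_Suc_shift) simp
  also have "\<dots> = g 0 (Suc k) + (\<Sum>i\<le>k. sc (of_nat (k choose i)) (g (Suc i) (k - i))) +
                  (\<Sum>i\<le>k. sc (of_nat (k choose Suc i)) (g (Suc i) (k - i)))"
    by (simp add: sc_plus sum.distrib add.assoc)
  finally show ?thesis using A' by (simp add: sc_add sum.distrib algebra_simps)
qed



lemma main_ident:
  assumes p: "evL p" and m: "oddL m" and q: "evL q" and pq: "dZ p = q + q"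
    and DZ: "Dd Z = Th" and DT: "Dd Th = (1, 0)" and ST: "sm Th (1, 0) = Th"
  shows "Dd ((Yv p m q ^^ k) Z) =
    (\<Sum>i\<le>k. sc (of_nat (k choose i)) (sm ((Yv p m q ^^ i) Th) (Dd ((Yv p m q ^^ (k - i)) Th))))"
proof (induction k)
  case 0
  then show ?case using DZ DT ST by simp
next
  case (Suc k)
  define Y where "Y = Yv p m q"
  define h where "h = hv m q"
  have hS: "evS h" unfolding h_def by (rule evS_hv[OF q m])
  have step: "\<And>G. Dd (Y G) = Y (Dd G) + sm h (Dd G)"
    unfolding Y_def h_def by (rule Dd_Yv[OF q pq])
  have key: "Y (sm ((Y ^^ i) Th) (Dd ((Y ^^ (k - i)) Th))) + sm h (sm ((Y ^^ i) Th) (Dd ((Y ^^ (k - i)) Th)))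
      = sm ((Y ^^ Suc i) Th) (Dd ((Y ^^ (k - i)) Th)) + sm ((Y ^^ i) Th) (Dd ((Y ^^ (Suc k - i)) Th))"
    if "i \<le> k" for i
  proof -
    have e: "Suc k - i = Suc (k - i)" using that by simp
    have "Y (sm ((Y ^^ i) Th) (Dd ((Y ^^ (k - i)) Th))) =
        sm (Y ((Y ^^ i) Th)) (Dd ((Y ^^ (k - i)) Th)) + sm ((Y ^^ i) Th) (Y (Dd ((Y ^^ (k - i)) Th)))"
      unfolding Y_def by (rule Yv_leibniz[OF p m q])
    moreover have "sm h (sm ((Y ^^ i) Th) (Dd ((Y ^^ (k - i)) Th))) =
        sm ((Y ^^ i) Th) (sm h (Dd ((Y ^^ (k - i)) Th)))"
      by (rule sm_evS_assoc[OF hS])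
    moreover have "Dd ((Y ^^ (Suc k - i)) Th) = Y (Dd ((Y ^^ (k - i)) Th)) + sm h (Dd ((Y ^^ (k - i)) Th))"
      unfolding e by (simp add: step)
    ultimately show ?thesis by (simp add: sm_add_right add.assoc)
  qed
  have "Dd ((Y ^^ Suc k) Z) = Y (Dd ((Y ^^ k) Z)) + sm h (Dd ((Y ^^ k) Z))"
    by (simp add: step)
  also have "\<dots> = (\<Sum>i\<le>k. sc (of_nat (k choose i))
      (Y (sm ((Y ^^ i) Th) (Dd ((Y ^^ (k - i)) Th))) + sm h (sm ((Y ^^ i) Th) (Dd ((Y ^^ (k - i)) Th)))))"
    using Suc.IH unfolding Y_def[symmetric]
    by (simp add: Y_def Yv_sum Yv_sc sm_sum_right sm_sc_right sc_add sum.distrib)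
  also have "\<dots> = (\<Sum>i\<le>k. sc (of_nat (k choose i))
      (sm ((Y ^^ Suc i) Th) (Dd ((Y ^^ (k - i)) Th)) + sm ((Y ^^ i) Th) (Dd ((Y ^^ (Suc k - i)) Th))))"
    by (rule sum.cong) (simp_all add: key)
  also have "\<dots> = (\<Sum>i\<le>Suc k. sc (of_nat (Suc k choose i)) (sm ((Y ^^ i) Th) (Dd ((Y ^^ (Suc k - i)) Th))))"
    by (rule pascal_sum[where g = "\<lambda>i j. sm ((Y ^^ i) Th) (Dd ((Y ^^ j) Th))"])
  finally show ?case unfolding Y_def .
qed

definition wtL :: "int \<Rightarrow> L \<Rightarrow> bool" where "wtL w f \<longleftrightarrow> (\<forall>k. f $$ k \<noteq> 0 \<longrightarrow> - 2 * k \<le> w)"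
definition wt :: "int \<Rightarrow> SS \<Rightarrow> bool" where "wt w F \<longleftrightarrow> wtL w (fst F) \<and> wtL (w - 1) (snd F)"

lemma wtL_mono: "wtL w f \<Longrightarrow> w \<le> w' \<Longrightarrow> wtL w' f" by (force simp: wtL_def)
lemma wtL_0[simp]: "wtL w 0" by (simp add: wtL_def)
lemma wtL_add: "wtL w f \<Longrightarrow> wtL w g \<Longrightarrow> wtL w (f + g)" by (force simp: wtL_def)
lemma wtL_uminus: "wtL w f \<Longrightarrow> wtL w (- f)" by (simp add: wtL_def)
lemma wtL_hatL: "wtL w f \<Longrightarrow> wtL w (hatL f)" by (simp add: wtL_def)
lemma wtL_fc: "wtL w f \<Longrightarrow> wtL w (fc c * f)" by (force simp: wtL_def fc_def)
lemma wtL_sum: "(\<And>i. i \<in> A \<Longrightarrow> wtL w (F i)) \<Longrightarrow> wtL w (\<Sum>i\<in>A. F i)"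
  by (induction A rule: infinite_finite_induct) (auto intro: wtL_add)
lemma wtL_dZ: "wtL w f \<Longrightarrow> wtL (w - 2) (dZ f)"
  unfolding wtL_def
proof (intro allI impI)
  fix k assume a: "\<forall>k. f $$ k \<noteq> 0 \<longrightarrow> - 2 * k \<le> w" and "dZ f $$ k \<noteq> 0"
  then have "f $$ (k - 1) \<noteq> 0" by (auto simp: dZ_nth)
  then have "- 2 * (k - 1) \<le> w" using a by blast
  then show "- 2 * k \<le> w - 2" by simp
qed
lemma wtL_mult:
  assumes "wtL a f" "wtL b g" shows "wtL (a + b) (f * g)"
  unfolding wtL_def
proof (intro allI impI)
  fix n assume "(f * g) $$ n \<noteq> 0"
  then have "(\<Sum>i = fls_subdegree f..n - fls_subdegree g. f $$ i * g $$ (n - i)) \<noteq> 0"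
    by (simp add: fls_times_nth(2))
  then obtain i where "f $$ i * g $$ (n - i) \<noteq> 0" by (meson sum.neutral)
  then have "f $$ i \<noteq> 0" "g $$ (n - i) \<noteq> 0" by auto
  then show "- 2 * n \<le> a + b" using assms unfolding wtL_def by force
qed
lemma wtL_below: "wtL w f \<Longrightarrow> w < - 2 * k \<Longrightarrow> f $$ k = 0"
  by (force simp: wtL_def)

lemma wt_mono: "wt w F \<Longrightarrow> w \<le> w' \<Longrightarrow> wt w' F" by (auto simp: wt_def intro: wtL_mono)
lemma wt_0[simp]: "wt w 0" by (simp add: wt_def zero_prod_def)
lemma wt_add: "wt w F \<Longrightarrow> wt w G \<Longrightarrow> wt w (F + G)" by (simp add: wt_def wtL_add)
lemma wt_sum: "(\<And>i. i \<in> A \<Longrightarrow> wt w (F i)) \<Longrightarrow> wt w (\<Sum>i\<in>A. F i)"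
  by (induction A rule: infinite_finite_induct) (auto intro: wt_add)
lemma wt_sc: "wt w F \<Longrightarrow> wt w (sc c F)" by (simp add: wt_def sc_def wtL_fc)
lemma wtL_mult': "wtL a f \<Longrightarrow> wtL b g \<Longrightarrow> a + b \<le> c \<Longrightarrow> wtL c (f * g)"
  using wtL_mult wtL_mono by blast
lemma wt_sm: "wt a F \<Longrightarrow> wt b G \<Longrightarrow> wt (a + b) (sm F G)"
  unfolding wt_def sm_def
proof (elim conjE, intro conjI)
  assume 1: "wtL a (fst F)" "wtL (a - 1) (snd F)" "wtL b (fst G)" "wtL (b - 1) (snd G)"
  show "wtL (a + b) (fst (fst F * fst G, hatL (fst F) * snd G + snd F * fst G))"
    using wtL_mult[OF 1(1,3)] by simp
  show "wtL (a + b - 1) (snd (fst F * fst G, hatL (fst F) * snd G + snd F * fst G))"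
    using wtL_mult'[OF wtL_hatL[OF 1(1)] 1(4)] wtL_mult'[OF 1(2) 1(3)] by (simp add: wtL_add)
qed
lemma wt_Dd: "wt w F \<Longrightarrow> wt (w - 1) (Dd F)"
  unfolding wt_def Dd_def using wtL_dZ by fastforce
lemma wt_Yv:
  assumes "wtL 0 p" "wtL 0 m" "wtL (-2) q" "wt w F"
  shows "wt (w - 1) (Yv p m q F)"
proof -
  have 1: "wtL w (fst F)" "wtL (w - 1) (snd F)" using assms(4) by (auto simp: wt_def)
  have a: "wtL (w - 1) (p * dZ (fst F) + m * snd F)"
    using wtL_mult'[OF assms(1) wtL_dZ[OF 1(1)]] wtL_mult'[OF assms(2) 1(2)] by (simp add: wtL_add)
  have b: "wtL (w - 2) (p * dZ (snd F) + m * dZ (fst F) + q * snd F)"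
    using wtL_mult'[OF assms(1) wtL_dZ[OF 1(2)]] wtL_mult'[OF assms(2) wtL_dZ[OF 1(1)]]
      wtL_mult'[OF assms(3) 1(2)] by (simp add: wtL_add)
  show ?thesis using a b by (simp add: wt_def Yv_def)
qed
lemma wt_pow:
  assumes "wtL 0 p" "wtL 0 m" "wtL (-2) q" "wt w F"
  shows "wt (w - int k) ((Yv p m q ^^ k) F)"
proof (induction k)
  case 0 then show ?case using assms(4) by simp
next
  case (Suc k)
  have "wt (w - int k - 1) (Yv p m q ((Yv p m q ^^ k) F))" by (rule wt_Yv[OF assms(1-3) Suc])
  then show ?case by (simp add: algebra_simps)
qed



definition toR :: "L \<Rightarrow> lser" where "toR f = (\<lambda>n. Rg (f $$ (- n)))"
definition toS :: "SS \<Rightarrow> sser" where "toS F = (toR (fst F), toR (snd F))"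

lemma toR_add: "toR (f + g) = toR f + toR g"
  by (simp add: toR_def fun_eq_iff Rg_add)
lemma toR_eq0: "toR f n = 0 \<longleftrightarrow> f $$ (- n) = 0"
  by (simp add: toR_def)

lemma lmul_toR: "lmul (toR f) (toR g) = toR (f * g)"
proof (rule ext)
  fix n
  let ?K = "{k. toR f k \<noteq> 0 \<and> toR g (n - k) \<noteq> 0}"
  have Ksub: "?K \<subseteq> {n + fls_subdegree g .. - fls_subdegree f}"
  proof
    fix k assume "k \<in> ?K"
    then have "f $$ (- k) \<noteq> 0" "g $$ (k - n) \<noteq> 0" by (auto simp: toR_eq0)
    then have "fls_subdegree f \<le> - k" "fls_subdegree g \<le> k - n" using fls_subdegree_leI by auto
    then show "k \<in> {n + fls_subdegree g .. - fls_subdegree f}" by auto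
  qed
  then have finK: "finite ?K" by (rule finite_subset) simp
  have "(f * g) $$ (- n) = (\<Sum>i\<in>uminus ` ?K. f $$ i * g $$ (- n - i))"
  proof (rule mulnth_gen)
    show "finite (uminus ` ?K)" using finK by simp
    fix i assume "f $$ i \<noteq> 0" "g $$ (- n - i) \<noteq> 0"
    moreover have "toR g (n - - i) = Rg (g $$ (- n - i))"
    proof -
      have "- i - n = - n - i" by simp
      then show ?thesis by (simp add: toR_def)
    qed
    moreover have "toR f (- i) = Rg (f $$ i)" by (simp add: toR_def)
    ultimately show "i \<in> uminus ` ?K" by (intro image_eqI[of _ _ "- i"]) auto
  qed
  also have "\<dots> = (\<Sum>k\<in>?K. f $$ (- k) * g $$ (k - n))"
    by (subst sum.reindex) (auto simp: inj_on_def)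
  finally have "toR (f * g) n = (\<Sum>k\<in>?K. gmul (toR f k) (toR g (n - k)))"
    by (simp add: toR_def Rg_sum Rg_mult)
  then show "lmul (toR f) (toR g) n = toR (f * g) n" by (simp add: lmul_def)
qed

lemma ghat_toR: "(\<lambda>k. ghat (toR f k)) = toR (hatL f)"
  by (simp add: toR_def fun_eq_iff ghg.rep_eq)

lemma smul_toS: "smul (toS F) (toS G) = toS (sm F G)"
  by (simp add: smul_def toS_def sm_def lmul_toR ghat_toR toR_add fun_eq_iff)

lemma dz_toR: "dz (toR f) = toR (dZ f)"
proof (rule ext)
  fix n :: int
  have e: "- n - 1 = - (n + 1)" "1 - - n = n + 1" by auto
  have d: "dZ f $$ (- n) = of_int (n + 1) * f $$ (- (n + 1))"
    by (simp only: dZ_nth e)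
  show "dz (toR f) n = toR (dZ f) n"
    unfolding dz_def toR_def by (simp only: d Rg_of_int_mult)
qed

lemma sD_toS: "sD (toS F) = toS (Dd F)"
  by (simp add: sD_def toS_def Dd_def dz_toR)

definition Zs :: SS where "Zs = (fls_shift 1 1, 0)"
definition Ths :: SS where "Ths = (0, 1)"

lemma toS_Zs: "toS Zs = zser"
  by (auto simp: toS_def Zs_def zser_def toR_def fun_eq_iff fls_one_nth Rg_1)
lemma toS_Ths: "toS Ths = thser"
  by (auto simp: toS_def Ths_def thser_def toR_def fun_eq_iff fls_one_nth Rg_1)

lemma Dd_Zs: "Dd Zs = Ths"
  by (auto simp: Dd_def Zs_def Ths_def intro!: fls_eqI simp: dZ_nth fls_one_nth)
lemma Dd_Ths: "Dd Ths = (1, 0)"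
  by (simp add: Dd_def Ths_def)
lemma sm_Ths: "sm Ths (1, 0) = Ths"
  by (simp add: sm_def Ths_def)
lemma wt_Zs: "wt 2 Zs"
  by (auto simp: wt_def wtL_def Zs_def split: if_splits)
lemma wt_Ths: "wt 1 Ths"
  by (auto simp: wt_def wtL_def Ths_def fls_one_nth split: if_splits)



definition restr :: "gr \<Rightarrow> gr" where "restr a = (\<lambda>S. if finite S then a S else 0)"
definition gA :: "gr \<Rightarrow> gg" where "gA a = Ag (restr a)"

lemma Rg_gA: "Rg (gA a) = restr a"
  unfolding gA_def by (rule Ag_inverse) (simp add: restr_def)

lemma gmul_restr: "gmul (restr a) b = gmul a b"
proof (rule ext)
  fix S show "gmul (restr a) b S = gmul a b S"
  proof (cases "finite S")
    case True
    show ?thesis unfolding gmul_fin[OF True]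
    proof (rule sum.cong[OF refl])
      fix T assume "T \<in> Pow S"
      then have "finite T" using True by (auto intro: finite_subset)
      then show "gsign T (S - T) * restr a T * b (S - T) = gsign T (S - T) * a T * b (S - T)"
        by (simp add: restr_def)
    qed
  qed (simp add: gmul_def)
qed

lemma Rg_gA_mult: "Rg (gA a * x) = gmul a (Rg x)"
  by (simp add: Rg_mult Rg_gA gmul_restr)

lemma evg_gA: "geven a \<Longrightarrow> evg (gA a)"
  by (simp add: evg_def Rg_gA geven_def restr_def)
lemma oddg_gA: "godd a \<Longrightarrow> oddg (gA a)"
  by (simp add: oddg_def Rg_gA godd_def restr_def)

definition pA :: "(int \<Rightarrow> gr) \<Rightarrow> L" where
  "pA A = Abs_fls (\<lambda>k. if 0 \<le> k then gA (A (- k - 1)) else 0)"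
definition qA :: "(int \<Rightarrow> gr) \<Rightarrow> L" where
  "qA A = Abs_fls (\<lambda>k. if 1 \<le> k then ccg ((of_int (- k) + 1) / 2) * gA (A (- k)) else 0)"

lemma pA_nth: "pA A $$ k = (if 0 \<le> k then gA (A (- k - 1)) else 0)"
  unfolding pA_def by (rule nth_Abs_fls_lower_bound[of 0]) simp
lemma qA_nth: "qA A $$ k = (if 1 \<le> k then ccg ((of_int (- k) + 1) / 2) * gA (A (- k)) else 0)"
  unfolding qA_def by (rule nth_Abs_fls_lower_bound[of 0]) simp

lemma conv_gen:
  fixes pX x :: L and c :: "int \<Rightarrow> gg" and s lo n :: int
  assumes pX: "\<And>i. pX $$ i = (if - i - s < 0 then c (- i - s) else 0)"
    and lo: "lo \<le> n - s + fls_subdegree x"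
  shows "(pX * x) $$ (- n) = (\<Sum>j\<in>{lo..-1}. c j * x $$ (j + s - n))"
proof -
  have "(pX * x) $$ (- n) = (\<Sum>i\<in>(\<lambda>j. - j - s) ` {lo..-1}. pX $$ i * x $$ (- n - i))"
  proof (rule mulnth_gen)
    fix i assume a: "pX $$ i \<noteq> 0" "x $$ (- n - i) \<noteq> 0"
    then have "- i - s < 0" using pX by (auto split: if_splits)
    moreover have "fls_subdegree x \<le> - n - i" using a fls_subdegree_leI by blast
    ultimately have "- i - s \<in> {lo..-1}" using lo by auto
    then show "i \<in> (\<lambda>j. - j - s) ` {lo..-1}" by (intro image_eqI[of _ _ "- i - s"]) auto
  qed simp
  also have "\<dots> = (\<Sum>j\<in>{lo..-1}. pX $$ (- j - s) * x $$ (- n - (- j - s)))"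
    by (subst sum.reindex) (auto simp: inj_on_def)
  also have "\<dots> = (\<Sum>j\<in>{lo..-1}. c j * x $$ (j + s - n))"
  proof (rule sum.cong[OF refl])
    fix j :: int assume "j \<in> {lo..-1}"
    then have "pX $$ (- j - s) = c j" using pX[of "- j - s"] by auto
    moreover have e: "- n - (- j - s) = j + s - n" by simp
    ultimately show "pX $$ (- j - s) * x $$ (- n - (- j - s)) = c j * x $$ (j + s - n)"
      unfolding e by simp
  qed
  finally show ?thesis .
qed

lemma negsum_eq:
  assumes "\<And>j. j < lo \<Longrightarrow> j < 0 \<Longrightarrow> F j = 0"
  shows "negsum F = (\<Sum>j\<in>{lo..-1}. F j)"
  unfolding negsum_def
proof (rule sum.mono_neutral_left)
  show "{j. j < 0 \<and> F j \<noteq> 0} \<subseteq> {lo..-1}" using assms by (force simp: not_less)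
qed auto

lemma Yterm_fst: "fst (Yterm A M j f) n =
    gmul (A j) (dz (fst f) (n - (j + 1))) + gmul (M j) (snd f (n - (j + 1)))"
proof -
  have 1: "fst (cmul (A j) (Lop j f)) n = - gmul (A j) (dz (fst f) (n - (j + 1)))"
    unfolding cmul_def Lop_def sh_def fst_conv by (rule gmul_uminus_right)
  have 2: "fst (cmul (M j) (Gop j f)) n = - gmul (M j) (snd f (n - (j + 1)))"
    unfolding cmul_def Gop_def sh_def fst_conv by (rule gmul_uminus_right)
  show ?thesis unfolding Yterm_def fst_conv 1 2 by simp
qed

lemma Yterm_snd:
  assumes "geven (A j)" "godd (M j)"
  shows "snd (Yterm A M j f) n =
    gmul (A j) (dz (snd f) (n - (j + 1))) + gscale ((of_int j + 1) / 2) (gmul (A j) (snd f (n - j)))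
    + gmul (M j) (dz (fst f) (n - (j + 1)))"
proof -
  have 1: "snd (cmul (A j) (Lop j f)) n = - gmul (A j) (dz (snd f) (n - (j + 1)))
      - gscale ((of_int j + 1) / 2) (gmul (A j) (snd f (n - j)))"
    unfolding cmul_def Lop_def sh_def snd_conv ghat_even[OF assms(1)]
    by (simp only: diff_conv_add_uminus gmul_add_right gmul_uminus_right gmul_gscale_right)
  have 2: "snd (cmul (M j) (Gop j f)) n = - gmul (M j) (dz (fst f) (n - (j + 1)))"
    unfolding cmul_def Gop_def sh_def snd_conv ghat_odd[OF assms(2)] by (rule gmul_uminus_left)
  show ?thesis unfolding Yterm_def snd_conv 1 2 by (simp add: algebra_simps)
qed



lemma toR_shift: "toR x (n - k) = Rg (x $$ (k - n))"
  by (simp add: toR_def)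

lemma Yop_toS:
  assumes hA: "\<And>j. j < 0 \<Longrightarrow> geven (A j)" and hM: "\<And>j. j < 0 \<Longrightarrow> godd (M j)"
  shows "Yop A M (toS F) = toS (Yv (pA A) (pA M) (qA A) F)"
proof -
  obtain F0 F1 where F: "F = (F0, F1)" by fastforce
  define dmin where "dmin = min (min (fls_subdegree (dZ F0)) (fls_subdegree F0))
                                (min (fls_subdegree (dZ F1)) (fls_subdegree F1))"
  have vz: "x $$ k = 0" if "x \<in> {dZ F0, F0, dZ F1, F1}" "k < dmin" for x k
    using that by (auto simp: dmin_def)
  have pAc: "\<And>B i. pA B $$ i = (if - i - 1 < 0 then gA (B (- i - 1)) else 0)"
    by (simp add: pA_nth)
  have qAc: "qA A $$ i = (if - i - 0 < 0 then ccg ((of_int (- i - 0) + 1) / 2) * gA (A (- i - 0)) else 0)"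
    for i by (simp add: qA_nth)
  have C0: "negsum (\<lambda>j. fst (Yterm A M j (toS F)) n) = toR (pA A * dZ F0 + pA M * F1) n" for n
  proof -
    define lo where "lo = n - 1 + dmin"
    have t: "fst (Yterm A M j (toS F)) n =
        gmul (A j) (Rg (dZ F0 $$ (j + 1 - n))) + gmul (M j) (Rg (F1 $$ (j + 1 - n)))" for j
      by (simp add: Yterm_fst toS_def F dz_toR toR_shift)
    have e1: "(pA A * dZ F0) $$ (- n) = (\<Sum>j\<in>{lo..-1}. gA (A j) * dZ F0 $$ (j + 1 - n))"
      by (rule conv_gen[OF pAc]) (simp add: lo_def dmin_def)
    have e2: "(pA M * F1) $$ (- n) = (\<Sum>j\<in>{lo..-1}. gA (M j) * F1 $$ (j + 1 - n))"
      by (rule conv_gen[OF pAc]) (simp add: lo_def dmin_def)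
    have "negsum (\<lambda>j. fst (Yterm A M j (toS F)) n) =
        (\<Sum>j\<in>{lo..-1}. gmul (A j) (Rg (dZ F0 $$ (j + 1 - n))) + gmul (M j) (Rg (F1 $$ (j + 1 - n))))"
      unfolding t by (rule negsum_eq) (simp add: vz lo_def)
    also have "\<dots> = Rg ((pA A * dZ F0) $$ (- n)) + Rg ((pA M * F1) $$ (- n))"
      unfolding e1 e2 by (simp add: Rg_sum Rg_gA_mult sum.distrib)
    finally show ?thesis by (simp add: toR_def Rg_add)
  qed
  have C1: "negsum (\<lambda>j. snd (Yterm A M j (toS F)) n) =
      toR (pA A * dZ F1 + pA M * dZ F0 + qA A * F1) n" for n
  proof -
    define lo where "lo = n - 1 + dmin"
    have t: "snd (Yterm A M j (toS F)) n =
        gmul (A j) (Rg (dZ F1 $$ (j + 1 - n))) +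
        gscale ((of_int j + 1) / 2) (gmul (A j) (Rg (F1 $$ (j - n)))) +
        gmul (M j) (Rg (dZ F0 $$ (j + 1 - n)))" if "j < 0" for j
      using Yterm_snd[where A=A and M=M and j=j, OF hA[OF that] hM[OF that], of "toS F" n]
      by (simp add: toS_def F dz_toR toR_shift)
    have e1: "(pA A * dZ F1) $$ (- n) = (\<Sum>j\<in>{lo..-1}. gA (A j) * dZ F1 $$ (j + 1 - n))"
      by (rule conv_gen[OF pAc]) (simp add: lo_def dmin_def)
    have e2: "(pA M * dZ F0) $$ (- n) = (\<Sum>j\<in>{lo..-1}. gA (M j) * dZ F0 $$ (j + 1 - n))"
      by (rule conv_gen[OF pAc]) (simp add: lo_def dmin_def)
    have e3: "(qA A * F1) $$ (- n) =
        (\<Sum>j\<in>{lo..-1}. ccg ((of_int j + 1) / 2) * gA (A j) * F1 $$ (j + 0 - n))"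
      by (rule conv_gen[OF qAc]) (simp add: lo_def dmin_def)
    have "negsum (\<lambda>j. snd (Yterm A M j (toS F)) n) =
        (\<Sum>j\<in>{lo..-1}. snd (Yterm A M j (toS F)) n)"
      by (rule negsum_eq) (simp add: t vz lo_def gscale_def fun_eq_iff)
    also have "\<dots> = (\<Sum>j\<in>{lo..-1}. gmul (A j) (Rg (dZ F1 $$ (j + 1 - n))) +
        gscale ((of_int j + 1) / 2) (gmul (A j) (Rg (F1 $$ (j - n)))) +
        gmul (M j) (Rg (dZ F0 $$ (j + 1 - n))))"
      by (rule sum.cong) (auto simp: t)
    also have "\<dots> = Rg ((pA A * dZ F1) $$ (- n)) + Rg ((pA M * dZ F0) $$ (- n)) + Rg ((qA A * F1) $$ (- n))"
      unfolding e1 e2 e3 by (simp add: Rg_sum Rg_gA_mult sum.distrib mult.assoc Rg_ccg_mult)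
    finally show ?thesis by (simp add: toR_def Rg_add)
  qed
  have yv: "Yv (pA A) (pA M) (qA A) F =
      (pA A * dZ F0 + pA M * F1, pA A * dZ F1 + pA M * dZ F0 + qA A * F1)"
    by (simp add: Yv_def F)
  show ?thesis unfolding Yop_def
    by (simp only: C0 C1 yv) (simp add: toS_def)
qed



lemma evL_pA: "(\<And>j. j < 0 \<Longrightarrow> geven (A j)) \<Longrightarrow> evL (pA A)"
  by (simp add: evL_def pA_nth evg_gA)
lemma oddL_pA: "(\<And>j. j < 0 \<Longrightarrow> godd (A j)) \<Longrightarrow> oddL (pA A)"
  by (simp add: oddL_def pA_nth oddg_gA)
lemma evL_qA: "(\<And>j. j < 0 \<Longrightarrow> geven (A j)) \<Longrightarrow> evL (qA A)"
  by (simp add: evL_def qA_nth evg_gA evg_ccg_mult)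
lemma wtL_pA: "wtL 0 (pA A)"
  by (simp add: wtL_def pA_nth)
lemma wtL_qA: "wtL (-2) (qA A)"
  by (simp add: wtL_def qA_nth)

lemma dZ_pA: "dZ (pA A) = qA A + qA A"
proof (rule fls_eqI)
  fix k
  show "dZ (pA A) $$ k = (qA A + qA A) $$ k"
  proof (cases "1 \<le> k")
    case True
    have e: "- (k - 1) - 1 = - k" by simp
    have c: "(of_int (- k) + 1) / 2 + (of_int (- k) + 1) / 2 = (of_int (1 - k) :: complex)" by simp
    have "dZ (pA A) $$ k = ccg (of_int (1 - k)) * gA (A (- k))"
      using True by (simp add: dZ_nth pA_nth e of_int_ccg)
    also have "\<dots> = ccg ((of_int (- k) + 1) / 2) * gA (A (- k)) + ccg ((of_int (- k) + 1) / 2) * gA (A (- k))"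
      unfolding c[symmetric] ccg_add by (simp add: algebra_simps)
    finally show ?thesis using True by (simp add: qA_nth)
  next
    case False then show ?thesis by (simp add: dZ_nth pA_nth qA_nth)
  qed
qed

definition Ec :: "(SS \<Rightarrow> SS) \<Rightarrow> (SS \<Rightarrow> L) \<Rightarrow> int \<Rightarrow> SS \<Rightarrow> int \<Rightarrow> gg" where
  "Ec Y sel w F m = (\<Sum>k\<le>nat (w + 2 * m + 1). ccg (inverse (fact k)) * sel ((Y ^^ k) F) $$ m)"
definition EE :: "(SS \<Rightarrow> SS) \<Rightarrow> int \<Rightarrow> SS \<Rightarrow> SS" where
  "EE Y w F = (Abs_fls (Ec Y fst w F), Abs_fls (Ec Y snd w F))"

lemma wt_fst_zero: "wt w F \<Longrightarrow> w < - 2 * m \<Longrightarrow> fst F $$ m = 0"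
  by (auto simp: wt_def intro: wtL_below)
lemma wt_snd_zero: "wt w F \<Longrightarrow> w - 1 < - 2 * m \<Longrightarrow> snd F $$ m = 0"
  by (auto simp: wt_def intro: wtL_below)

lemma EE_nth:
  assumes wp: "\<And>k. wt (w - int k) ((Y ^^ k) F)"
  shows "fst (EE Y w F) $$ m = Ec Y fst w F m" "snd (EE Y w F) $$ m = Ec Y snd w F m"
proof -
  have "Ec Y fst w F m = 0" if "m < - \<bar>w\<bar>" for m
    unfolding Ec_def
  proof (rule sum.neutral, intro ballI)
    fix k assume "k \<in> {..nat (w + 2 * m + 1)}"
    have "w - int k < - 2 * m" using that by auto
    then have "fst ((Y ^^ k) F) $$ m = 0" by (rule wt_fst_zero[OF wp])
    then show "ccg (inverse (fact k)) * fst ((Y ^^ k) F) $$ m = 0" by simp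
  qed
  then show "fst (EE Y w F) $$ m = Ec Y fst w F m"
    unfolding EE_def fst_conv by (intro nth_Abs_fls_lower_bound) auto
  have "Ec Y snd w F m = 0" if "m < - \<bar>w\<bar>" for m
    unfolding Ec_def
  proof (rule sum.neutral, intro ballI)
    fix k assume "k \<in> {..nat (w + 2 * m + 1)}"
    have "w - int k - 1 < - 2 * m" using that by auto
    then have "snd ((Y ^^ k) F) $$ m = 0" by (rule wt_snd_zero[OF wp])
    then show "ccg (inverse (fact k)) * snd ((Y ^^ k) F) $$ m = 0" by simp
  qed
  then show "snd (EE Y w F) $$ m = Ec Y snd w F m"
    unfolding EE_def snd_conv by (intro nth_Abs_fls_lower_bound) auto
qed

lemma Eop_toS:
  assumes YY: "\<And>G. Yop A M (toS G) = toS (Y G)"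
    and wp: "\<And>k. wt (w - int k) ((Y ^^ k) F)"
  shows "Eop A M (toS F) = toS (EE Y w F)"
proof -
  have pw: "(Yop A M ^^ k) (toS F) = toS ((Y ^^ k) F)" for k
    by (induction k) (simp_all add: YY)
  have C: "(\<Sum>k\<in>{k. toR (sel ((Y ^^ k) F)) n \<noteq> 0}. gscale (inverse (fact k)) (toR (sel ((Y ^^ k) F)) n))
      = toR (Abs_fls (Ec Y sel w F)) n"
    if sel: "sel = fst \<or> sel = snd" and nth: "Abs_fls (Ec Y sel w F) $$ (- n) = Ec Y sel w F (- n)" for sel n
  proof -
    have sub: "{k. toR (sel ((Y ^^ k) F)) n \<noteq> 0} \<subseteq> {..nat (w + 2 * (- n) + 1)}"
    proof
      fix k assume "k \<in> {k. toR (sel ((Y ^^ k) F)) n \<noteq> 0}"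
      then have nz: "sel ((Y ^^ k) F) $$ (- n) \<noteq> 0" by (simp add: toR_eq0)
      have "\<not> (w - int k < - 2 * (- n))"
        using sel nz wt_fst_zero[OF wp] wt_snd_zero[OF wp] by force
      then show "k \<in> {..nat (w + 2 * (- n) + 1)}" by auto
    qed
    have "(\<Sum>k\<in>{k. toR (sel ((Y ^^ k) F)) n \<noteq> 0}. gscale (inverse (fact k)) (toR (sel ((Y ^^ k) F)) n))
        = (\<Sum>k\<le>nat (w + 2 * (- n) + 1). gscale (inverse (fact k)) (toR (sel ((Y ^^ k) F)) n))"
      by (rule sum.mono_neutral_left) (use sub in \<open>auto simp: gscale_def fun_eq_iff\<close>)
    also have "\<dots> = Rg (Ec Y sel w F (- n))"
      by (simp add: Ec_def Rg_sum Rg_ccg_mult toR_def)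
    finally show ?thesis using nth by (simp add: toR_def)
  qed
  show ?thesis
    unfolding Eop_def pw
    using C[of fst] C[of snd] EE_nth[OF wp]
    by (simp add: toS_def EE_def fun_eq_iff)
qed



definition TT :: "(SS \<Rightarrow> SS) \<Rightarrow> nat \<Rightarrow> SS \<Rightarrow> SS" where
  "TT Y K F = (\<Sum>k\<le>K. sc (inverse (fact k)) ((Y ^^ k) F))"

lemma fst_sum_nth: "fst (\<Sum>i\<in>A. X i) $$ m = (\<Sum>i\<in>A. fst (X i) $$ m)"
  by (simp add: fst_sum fls_nth_sum)
lemma snd_sum_nth: "snd (\<Sum>i\<in>A. X i) $$ m = (\<Sum>i\<in>A. snd (X i) $$ m)"
  by (simp add: snd_sum fls_nth_sum)
lemma sc_nth: "fst (sc c F) $$ m = ccg c * fst F $$ m" "snd (sc c F) $$ m = ccg c * snd F $$ m"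
  by (simp_all add: sc_def fc_def)

lemma TT_agree:
  assumes wp: "\<And>k. wt (w - int k) ((Y ^^ k) F)" and K: "nat (w + 2 * m + 1) \<le> K"
  shows "fst (TT Y K F) $$ m = fst (EE Y w F) $$ m" "snd (TT Y K F) $$ m = snd (EE Y w F) $$ m"
proof -
  have z: "fst ((Y ^^ k) F) $$ m = 0" "snd ((Y ^^ k) F) $$ m = 0" if "k \<in> {..K} - {..nat (w + 2 * m + 1)}" for k
  proof -
    have "w - int k < - 2 * m" "w - int k - 1 < - 2 * m" using that by auto
    then show "fst ((Y ^^ k) F) $$ m = 0" "snd ((Y ^^ k) F) $$ m = 0"
      using wt_fst_zero[OF wp] wt_snd_zero[OF wp] by auto
  qed
  show "fst (TT Y K F) $$ m = fst (EE Y w F) $$ m"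
    unfolding EE_nth[OF wp] Ec_def TT_def fst_sum_nth sc_nth
    by (rule sum.mono_neutral_right) (use K z in auto)
  show "snd (TT Y K F) $$ m = snd (EE Y w F) $$ m"
    unfolding EE_nth[OF wp] Ec_def TT_def snd_sum_nth sc_nth
    by (rule sum.mono_neutral_right) (use K z in auto)
qed

lemma Ec_nz:
  assumes "Ec Y sel w F m \<noteq> 0" obtains k where "sel ((Y ^^ k) F) $$ m \<noteq> 0"
proof -
  obtain k where "ccg (inverse (fact k)) * sel ((Y ^^ k) F) $$ m \<noteq> 0"
    using assms unfolding Ec_def by (meson sum.neutral)
  then show ?thesis using that by (metis mult_zero_right)
qed

lemma wt_EE:
  assumes wp: "\<And>k. wt (w - int k) ((Y ^^ k) F)"
  shows "wt w (EE Y w F)"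
proof -
  have A: "- 2 * m \<le> w" if nz: "Ec Y fst w F m \<noteq> 0" for m
  proof -
    obtain k where k: "fst ((Y ^^ k) F) $$ m \<noteq> 0" using Ec_nz[OF nz] by blast
    have "\<not> w - int k < - 2 * m"
    proof
      assume "w - int k < - 2 * m"
      then have "fst ((Y ^^ k) F) $$ m = 0" by (rule wt_fst_zero[OF wp])
      then show False using k by simp
    qed
    then show ?thesis by simp
  qed
  have B: "- 2 * m \<le> w - 1" if nz: "Ec Y snd w F m \<noteq> 0" for m
  proof -
    obtain k where k: "snd ((Y ^^ k) F) $$ m \<noteq> 0" using Ec_nz[OF nz] by blast
    have "\<not> w - int k - 1 < - 2 * m"
    proof
      assume "w - int k - 1 < - 2 * m"
      then have "snd ((Y ^^ k) F) $$ m = 0" by (rule wt_snd_zero[OF wp])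
      then show False using k by simp
    qed
    then show ?thesis by simp
  qed
  show ?thesis unfolding wt_def wtL_def EE_nth[OF wp] using A B by blast
qed

lemma wt_TT:
  assumes wp: "\<And>k. wt (w - int k) ((Y ^^ k) F)"
  shows "wt w (TT Y K F)"
  unfolding TT_def by (rule wt_sum, rule wt_sc, rule wt_mono[OF wp]) simp

definition agree :: "int \<Rightarrow> SS \<Rightarrow> SS \<Rightarrow> bool" where
  "agree m F G \<longleftrightarrow> (\<forall>i\<le>m. fst F $$ i = fst G $$ i \<and> snd F $$ i = snd G $$ i)"
definition low :: "SS \<Rightarrow> bool" where
  "low F \<longleftrightarrow> (\<forall>i<0. fst F $$ i = 0 \<and> snd F $$ i = 0)"

lemma low_wt: "wt w F \<Longrightarrow> w \<le> 1 \<Longrightarrow> low F"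
  unfolding low_def wt_def wtL_def by force

lemma agree_Dd: "agree m F G \<Longrightarrow> agree m (Dd F) (Dd G)"
  unfolding agree_def Dd_def by (auto simp: dZ_nth)

lemma prod_local:
  fixes f f' g g' :: L
  assumes "\<And>i. i < 0 \<Longrightarrow> f $$ i = 0" "\<And>i. i < 0 \<Longrightarrow> f' $$ i = 0"
    "\<And>i. i < 0 \<Longrightarrow> g $$ i = 0" "\<And>i. i < 0 \<Longrightarrow> g' $$ i = 0"
    "\<And>i. i \<le> m \<Longrightarrow> f $$ i = f' $$ i" "\<And>i. i \<le> m \<Longrightarrow> g $$ i = g' $$ i"
  shows "(f * g) $$ m = (f' * g') $$ m"
proof -
  have "(f * g) $$ m = (\<Sum>i\<in>{0..m}. f $$ i * g $$ (m - i))"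
    by (rule mulnth_gen) (use assms(1,3) in \<open>force simp: not_less\<close>)+
  moreover have "(f' * g') $$ m = (\<Sum>i\<in>{0..m}. f' $$ i * g' $$ (m - i))"
    by (rule mulnth_gen) (use assms(2,4) in \<open>force simp: not_less\<close>)+
  ultimately show ?thesis using assms(5,6) by (auto intro!: sum.cong)
qed

lemma agree_sm:
  assumes "low F" "low F'" "low G" "low G'" "agree m F F'" "agree m G G'"
  shows "agree m (sm F G) (sm F' G')"
  unfolding agree_def
proof (intro allI impI)
  fix i assume i: "i \<le> m"
  have a1: "\<And>k. k \<le> i \<Longrightarrow> fst F $$ k = fst F' $$ k" using assms(5) i unfolding agree_def by auto
  have a2: "\<And>k. k \<le> i \<Longrightarrow> snd F $$ k = snd F' $$ k" using assms(5) i unfolding agree_def by auto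
  have a3: "\<And>k. k \<le> i \<Longrightarrow> fst G $$ k = fst G' $$ k" using assms(6) i unfolding agree_def by auto
  have a4: "\<And>k. k \<le> i \<Longrightarrow> snd G $$ k = snd G' $$ k" using assms(6) i unfolding agree_def by auto
  have a5: "\<And>k. k \<le> i \<Longrightarrow> hatL (fst F) $$ k = hatL (fst F') $$ k" using a1 by simp
  have l1: "\<And>k. k < 0 \<Longrightarrow> fst F $$ k = 0" "\<And>k. k < 0 \<Longrightarrow> snd F $$ k = 0"
    using assms(1) unfolding low_def by auto
  have l2: "\<And>k. k < 0 \<Longrightarrow> fst F' $$ k = 0" "\<And>k. k < 0 \<Longrightarrow> snd F' $$ k = 0"
    using assms(2) unfolding low_def by auto
  have l3: "\<And>k. k < 0 \<Longrightarrow> fst G $$ k = 0" "\<And>k. k < 0 \<Longrightarrow> snd G $$ k = 0"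
    using assms(3) unfolding low_def by auto
  have l4: "\<And>k. k < 0 \<Longrightarrow> fst G' $$ k = 0" "\<And>k. k < 0 \<Longrightarrow> snd G' $$ k = 0"
    using assms(4) unfolding low_def by auto
  have l5: "\<And>k. k < 0 \<Longrightarrow> hatL (fst F) $$ k = 0" "\<And>k. k < 0 \<Longrightarrow> hatL (fst F') $$ k = 0"
    using l1 l2 by simp_all
  have "(fst F * fst G) $$ i = (fst F' * fst G') $$ i"
    by (rule prod_local[OF l1(1) l2(1) l3(1) l4(1) a1 a3])
  moreover have "(hatL (fst F) * snd G) $$ i = (hatL (fst F') * snd G') $$ i"
    by (rule prod_local[OF l5(1) l5(2) l3(2) l4(2) a5 a4])
  moreover have "(snd F * fst G) $$ i = (snd F' * fst G') $$ i"
    by (rule prod_local[OF l1(2) l2(2) l3(1) l4(1) a2 a3])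
  ultimately show "fst (sm F G) $$ i = fst (sm F' G') $$ i \<and> snd (sm F G) $$ i = snd (sm F' G') $$ i"
    by (simp add: sm_def)
qed



lemma binom_fact_inv:
  assumes "i \<le> k"
  shows "inverse (fact k) * of_nat (k choose i) = inverse (fact i) * (inverse (fact (k - i)) :: complex)"
  using assms by (simp add: binomial_fact field_simps)

lemma final_key:
  assumes p: "evL p" and m: "oddL mm" and q: "evL q" and pq: "dZ p = q + q"
    and wp: "wtL 0 p" and wm: "wtL 0 mm" and wq: "wtL (-2) q"
  shows "Dd (EE (Yv p mm q) 2 Zs) = sm (EE (Yv p mm q) 1 Ths) (Dd (EE (Yv p mm q) 1 Ths))"
proof -
  define Y where "Y = Yv p mm q"
  have wpZ: "\<And>k. wt (2 - int k) ((Y ^^ k) Zs)"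
    unfolding Y_def by (rule wt_pow[OF wp wm wq wt_Zs])
  have wpT: "\<And>k. wt (1 - int k) ((Y ^^ k) Ths)"
    unfolding Y_def by (rule wt_pow[OF wp wm wq wt_Ths])
  define EZ where "EZ = EE Y 2 Zs"
  define ET where "ET = EE Y 1 Ths"
  define a where "a i = (Y ^^ i) Ths" for i
  define b where "b j = Dd ((Y ^^ j) Ths)" for j
  define X where "X i j = sc (inverse (fact i) * inverse (fact j)) (sm (a i) (b j))" for i j
  have wX: "wt (1 - int i - int j) (X i j)" for i j
  proof -
    have "wt (1 - int i + (1 - int j - 1)) (sm (a i) (b j))"
      unfolding a_def b_def by (rule wt_sm[OF wpT wt_Dd[OF wpT]])
    then show ?thesis unfolding X_def by (intro wt_sc) simp
  qed
  have MI: "Dd ((Y ^^ k) Zs) = (\<Sum>i\<le>k. sc (of_nat (k choose i)) (sm (a i) (b (k - i))))" for k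
    unfolding Y_def a_def b_def by (rule main_ident[OF p m q pq Dd_Zs Dd_Ths sm_Ths])
  have C1: "Dd (TT Y K Zs) = (\<Sum>(i,j)\<in>{(i,j). i + j \<le> K}. X i j)" for K
  proof -
    have "Dd (TT Y K Zs) = (\<Sum>k\<le>K. \<Sum>i\<le>k. X i (k - i))"
      unfolding TT_def Dd_sum Dd_sc MI sc_sum sc_sc
    proof (intro sum.cong refl)
      fix k i assume "k \<in> {..K}" "i \<in> {..k}"
      then have "i \<le> k" by simp
      then show "sc (inverse (fact k) * of_nat (k choose i)) (sm (a i) (b (k - i))) = X i (k - i)"
        unfolding X_def by (simp add: binom_fact_inv)
    qed
    then show ?thesis by (simp add: sum.triangle_reindex_eq)
  qed
  have C2: "sm (TT Y K Ths) (Dd (TT Y K Ths)) = (\<Sum>(i,j)\<in>{..K} \<times> {..K}. X i j)" for K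
  proof -
    have "sm (TT Y K Ths) (Dd (TT Y K Ths)) = (\<Sum>i\<le>K. \<Sum>j\<le>K. X i j)"
      unfolding TT_def Dd_sum Dd_sc sm_sum_left sm_sum_right sm_sc_left sm_sc_right sc_sum sc_sc
        X_def a_def b_def
      by (subst sum.swap) (simp add: mult.commute)
    then show ?thesis by (simp add: sum.cartesian_product)
  qed
  show ?thesis
  proof (rule prod_eqI; rule fls_eqI)
    fix n :: int
    define K where "K = nat (2 * n + 3)"
    have Kge: "2 * n + 3 \<le> int K" unfolding K_def by simp
    have agZ: "agree n EZ (TT Y K Zs)"
      unfolding agree_def EZ_def
    proof (intro allI impI conjI)
      fix i assume "i \<le> n"
      then have "nat (2 + 2 * i + 1) \<le> K" unfolding K_def by simp
      then show "fst (EE Y 2 Zs) $$ i = fst (TT Y K Zs) $$ i" "snd (EE Y 2 Zs) $$ i = snd (TT Y K Zs) $$ i"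
        using TT_agree[OF wpZ] by simp_all
    qed
    have agT: "agree n ET (TT Y K Ths)"
      unfolding agree_def ET_def
    proof (intro allI impI conjI)
      fix i assume "i \<le> n"
      then have "nat (1 + 2 * i + 1) \<le> K" unfolding K_def by simp
      then show "fst (EE Y 1 Ths) $$ i = fst (TT Y K Ths) $$ i" "snd (EE Y 1 Ths) $$ i = snd (TT Y K Ths) $$ i"
        using TT_agree[OF wpT] by simp_all
    qed
    have wET: "wt 1 ET" unfolding ET_def by (rule wt_EE[OF wpT])
    have wTT: "wt 1 (TT Y K Ths)" by (rule wt_TT[OF wpT])
    have lows: "low ET" "low (Dd ET)" "low (TT Y K Ths)" "low (Dd (TT Y K Ths))"
      using low_wt[OF wET] low_wt[OF wt_Dd[OF wET]] low_wt[OF wTT] low_wt[OF wt_Dd[OF wTT]] by simp_all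
    have ag1: "agree n (Dd EZ) (Dd (TT Y K Zs))" by (rule agree_Dd[OF agZ])
    have ag2: "agree n (sm ET (Dd ET)) (sm (TT Y K Ths) (Dd (TT Y K Ths)))"
      by (rule agree_sm[OF lows(1) lows(3) lows(2) lows(4) agT agree_Dd[OF agT]])
    have sub: "{(i,j). i + j \<le> K} \<subseteq> {..K} \<times> {..K}" by auto
    have z: "fst (X i j) $$ n = 0" "snd (X i j) $$ n = 0" if "(i, j) \<in> {..K} \<times> {..K} - {(i,j). i + j \<le> K}" for i j
    proof -
      have "1 - int i - int j < - 2 * n" "1 - int i - int j - 1 < - 2 * n" using that Kge by auto
      then show "fst (X i j) $$ n = 0" "snd (X i j) $$ n = 0"
        using wt_fst_zero[OF wX] wt_snd_zero[OF wX] by auto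
    qed
    have T1: "fst (\<Sum>(i,j)\<in>{..K} \<times> {..K}. X i j) $$ n = fst (\<Sum>(i,j)\<in>{(i,j). i + j \<le> K}. X i j) $$ n"
      unfolding fst_sum_nth by (rule sum.mono_neutral_right) (use sub z in auto)
    have T2: "snd (\<Sum>(i,j)\<in>{..K} \<times> {..K}. X i j) $$ n = snd (\<Sum>(i,j)\<in>{(i,j). i + j \<le> K}. X i j) $$ n"
      unfolding snd_sum_nth
    proof (rule sum.mono_neutral_right)
      show "\<forall>x\<in>{..K} \<times> {..K} - {(i, j). i + j \<le> K}. snd (case x of (i, j) \<Rightarrow> X i j) $$ n = 0"
        using z(2) by auto
    qed (use sub in auto)
    have "fst (Dd EZ) $$ n = fst (sm ET (Dd ET)) $$ n"
      using ag1 ag2 T1 C1[of K] C2[of K] unfolding agree_def by simp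
    moreover have "snd (Dd EZ) $$ n = snd (sm ET (Dd ET)) $$ n"
      using ag1 ag2 T2 C1[of K] C2[of K] unfolding agree_def by simp
    ultimately show "fst (Dd (EE (Yv p mm q) 2 Zs)) $$ n = fst (sm (EE (Yv p mm q) 1 Ths) (Dd (EE (Yv p mm q) 1 Ths))) $$ n"
      "snd (Dd (EE (Yv p mm q) 2 Zs)) $$ n = snd (sm (EE (Yv p mm q) 1 Ths) (Dd (EE (Yv p mm q) 1 Ths))) $$ n"
      unfolding EZ_def ET_def Y_def by simp_all
  qed
qed

theorem theorem3p1:
  fixes A M :: "int \<Rightarrow> gr"
  assumes "\<And>j. j < 0 \<Longrightarrow> grass (A j) \<and> geven (A j)"
      and "\<And>j. j < 0 \<Longrightarrow> grass (M j) \<and> godd (M j)"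
  shows "sD (Eop A M zser) = smul (Eop A M thser) (sD (Eop A M thser))"
proof -
  have hA: "\<And>j. j < 0 \<Longrightarrow> geven (A j)" using assms(1) by blast
  have hM: "\<And>j. j < 0 \<Longrightarrow> godd (M j)" using assms(2) by blast
  define Y where "Y = Yv (pA A) (pA M) (qA A)"
  have YY: "\<And>G. Yop A M (toS G) = toS (Y G)" unfolding Y_def by (rule Yop_toS[OF hA hM])
  have wpZ: "\<And>k. wt (2 - int k) ((Y ^^ k) Zs)"
    unfolding Y_def by (rule wt_pow[OF wtL_pA wtL_pA wtL_qA wt_Zs])
  have wpT: "\<And>k. wt (1 - int k) ((Y ^^ k) Ths)"
    unfolding Y_def by (rule wt_pow[OF wtL_pA wtL_pA wtL_qA wt_Ths])
  have EZ: "Eop A M zser = toS (EE Y 2 Zs)"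
    using Eop_toS[OF YY wpZ] by (simp add: toS_Zs)
  have ET: "Eop A M thser = toS (EE Y 1 Ths)"
    using Eop_toS[OF YY wpT] by (simp add: toS_Ths)
  have key: "Dd (EE Y 2 Zs) = sm (EE Y 1 Ths) (Dd (EE Y 1 Ths))"
    unfolding Y_def
    by (rule final_key[OF evL_pA[OF hA] oddL_pA[OF hM] evL_qA[OF hA] dZ_pA wtL_pA wtL_pA wtL_qA])
  show ?thesis unfolding EZ ET sD_toS smul_toS key ..
qed


end
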